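(* Let $\bar x\in\Phi$ be a local second-order weak sharp minimizer of problem (P) with corresponding constants $\kappa>0$ and $\delta>0$. Suppose that DirRCQ holds at every $x\in\Phi\cap B_\delta(\bar x)$ in every direction $d\in C(x)$. Then for any $\varepsilon\in[0,1/2)$, $x\in S\cap B_\delta(\bar x)$ and $d\in C(x)\cap N^{P,\varepsilon}_S(x)$: (i) for every nonempty convex subset $K(d)\subset T''_K(g(x);\nabla g(x)d)$ there exists $\lambda\in\Lambda^c(x;d)$ with $\sigma_{K(d)}(\lambda)\le0$; (ii) if $T^2_K(g(x);\nabla g(x)d)\ne\emptyset$, then for every nonempty convex subset $\hat K(d)\subset T^2_K(g(x);\nabla g(x)d)$ there exists $\lambda\in\Lambda^c(x;d)$ with $\nabla^2_{xx}L(x,\lambda)(d,d)-\sigma_{\hat K(d)}(\lambda)\ge2\kappa(1-2\varepsilon)^2\|d\|^2$. Moreover, for every $x\in S\cap B_\delta(\bar x)$ and every $d\in C(x)$, (i) holds and (ii) holds with right-hand side replaced by $2\kappa[\mathrm{dist}(d,T_S(x))]^2$.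
   Context: Standing setting: $f:\mathbb{R}^n\to\mathbb{R}$, $g:\mathbb{R}^n\to\mathbb{R}^m$ twice continuously differentiable, $K\subset\mathbb{R}^m$ closed; (P) is $\min f(x)$ s.t. $g(x)\in K$; $\Phi:=\{x:g(x)\in K\}$; $S$ is the (nonempty) set of optimal solutions; $L(x,\lambda):=f(x)+\langle g(x),\lambda\rangle$. $\bar x\in\Phi$ is a local second-order weak sharp minimizer with constants $\kappa,\delta>0$ if $f(x)\ge f(\bar x)+\kappa[\mathrm{dist}(x,S)]^2$ for all $x\in\Phi\cap B_\delta(\bar x)$. For a closed set $A$ and $\bar x\in A$: $T_A(\bar x):=\{d:\exists t_k\downarrow0,d_k\to d,\bar x+t_kd_k\in A\}$; for $d\in T_A(\bar x)$, $T^2_A(\bar x;d):=\{w:\exists t_k\downarrow0,w_k\to w,\bar x+t_kd+\tfrac12t_k^2w_k\in A\}$, $T''_A(\bar x;d):=\{w:\exists(t_k,r_k)\downarrow(0,0),t_k/r_k\to0,w_k\to w,\bar x+t_kd+\tfrac12t_kr_kw_k\in A\}$. $C(x):=\{d:\nabla g(x)d\in T_K(g(x)),\nabla f(x)d\le0\}$. $N^P_A(\bar x):=\{v:\exists\tau>0,\ \bar x\text{ is a nearest point of }A\text{ to }\bar x+\tau v\}$; $N^{P,\varepsilon}_A(\bar x):=\{v:\mathrm{dist}(v,N^P_A(\bar x))\le\varepsilon\|v\|\}$. Fréchet normal cone $\hat N_A(y):=\{v:\limsup_{y'\to y,y'\in A}\langle v,y'-y\rangle/\|y'-y\|\le0\}$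 (empty if $y\notin A$); $N_A(\bar y;u):=\{v:\exists t_k\downarrow0,u_k\to u,v_k\to v,v_k\in\hat N_A(\bar y+t_ku_k)\}$; $N^c_A(\bar y;u):=\mathrm{cl}\,\mathrm{co}\,N_A(\bar y;u)$. $\Lambda^c(x;d):=\{\lambda:\nabla_xL(x,\lambda)=0,\lambda\in N^c_K(g(x);\nabla g(x)d)\}$. DirRCQ at $x$ in direction $d$: $\nabla g(x)^T\lambda=0,\ \lambda\in N^c_K(g(x);\nabla g(x)d)\Rightarrow\lambda=0$. $\sigma_A(\lambda):=\sup_{u\in A}\langle\lambda,u\rangle$. *)

theory Defs
  imports "HOL-Analysis.Analysis"
begin

text \<open>Problem (P): minimise f x subject to g x in K.\<close>

definition feasible_set :: "('a \<Rightarrow> 'b) \<Rightarrow> 'b set \<Rightarrow> 'a set" where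
  "feasible_set g K = {x. g x \<in> K}"

definition optimal_set :: "('a \<Rightarrow> real) \<Rightarrow> ('a \<Rightarrow> 'b) \<Rightarrow> 'b set \<Rightarrow> 'a set" where
  "optimal_set f g K = {x \<in> feasible_set g K. \<forall>y\<in>feasible_set g K. f x \<le> f y}"

definition weak_sharp_min2 ::
  "('a::metric_space \<Rightarrow> real) \<Rightarrow> ('a \<Rightarrow> 'b) \<Rightarrow> 'b set \<Rightarrow> 'a \<Rightarrow> real \<Rightarrow> real \<Rightarrow> bool" where
  "weak_sharp_min2 f g K xbar \<kappa> \<delta> \<longleftrightarrow>
     xbar \<in> feasible_set g K \<and> \<kappa> > 0 \<and> \<delta> > 0 \<and>
     (\<forall>x \<in> feasible_set g K \<inter> ball xbar \<delta>.
        f x \<ge> f xbar + \<kappa> * (infdist x (optimal_set f g K))\<^sup>2)"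

definition tangent_cone :: "'a::real_normed_vector set \<Rightarrow> 'a \<Rightarrow> 'a set" where
  "tangent_cone A x = {d. \<exists>(t::nat \<Rightarrow> real) dk. (\<forall>k. t k > 0) \<and> t \<longlonglongrightarrow> 0 \<and>
      dk \<longlonglongrightarrow> d \<and> (\<forall>k. x + t k *\<^sub>R dk k \<in> A)}"

definition second_tangent_set :: "'a::real_normed_vector set \<Rightarrow> 'a \<Rightarrow> 'a \<Rightarrow> 'a set" where
  "second_tangent_set A x d = {w. \<exists>(t::nat \<Rightarrow> real) wk. (\<forall>k. t k > 0) \<and> t \<longlonglongrightarrow> 0 \<and>
      wk \<longlonglongrightarrow> w \<and> (\<forall>k. x + t k *\<^sub>R d + ((1/2) * (t k)\<^sup>2) *\<^sub>R wk k \<in> A)}"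

definition asymptotic_second_tangent_cone :: "'a::real_normed_vector set \<Rightarrow> 'a \<Rightarrow> 'a \<Rightarrow> 'a set" where
  "asymptotic_second_tangent_cone A x d = {w. \<exists>(t::nat \<Rightarrow> real) (r::nat \<Rightarrow> real) wk.
      (\<forall>k. t k > 0 \<and> r k > 0) \<and> t \<longlonglongrightarrow> 0 \<and> r \<longlonglongrightarrow> 0 \<and>
      (\<lambda>k. t k / r k) \<longlonglongrightarrow> 0 \<and> wk \<longlonglongrightarrow> w \<and>
      (\<forall>k. x + t k *\<^sub>R d + ((1/2) * t k * r k) *\<^sub>R wk k \<in> A)}"

definition critical_cone ::
  "('a \<Rightarrow> ('a \<Rightarrow>\<^sub>L real)) \<Rightarrow> ('a \<Rightarrow> ('a \<Rightarrow>\<^sub>L 'b::real_normed_vector)) \<Rightarrow> ('a \<Rightarrow> 'b) \<Rightarrow> 'b set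
     \<Rightarrow> 'a::real_normed_vector \<Rightarrow> 'a set" where
  "critical_cone Df Dg g K x =
     {d. blinfun_apply (Dg x) d \<in> tangent_cone K (g x) \<and> blinfun_apply (Df x) d \<le> 0}"

definition prox_normal_cone :: "'a::real_normed_vector set \<Rightarrow> 'a \<Rightarrow> 'a set" where
  "prox_normal_cone A x = {v. \<exists>\<tau>>0. x \<in> A \<and>
      (\<forall>y\<in>A. dist (x + \<tau> *\<^sub>R v) x \<le> dist (x + \<tau> *\<^sub>R v) y)}"

definition eps_prox_normal_cone :: "'a::real_normed_vector set \<Rightarrow> 'a \<Rightarrow> real \<Rightarrow> 'a set" where
  "eps_prox_normal_cone A x \<epsilon> = {v. infdist v (prox_normal_cone A x) \<le> \<epsilon> * norm v}"

text \<open>Frechet (regular) normal cone; the limsup condition written out.\<close>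
definition frechet_normal_cone :: "'a::real_inner set \<Rightarrow> 'a \<Rightarrow> 'a set" where
  "frechet_normal_cone A y = (if y \<in> A then
     {v. \<forall>e>0. \<exists>r>0. \<forall>y'\<in>A. y' \<noteq> y \<and> norm (y' - y) < r \<longrightarrow>
          inner v (y' - y) / norm (y' - y) \<le> e}
     else {})"

definition dir_normal_cone :: "'a::real_inner set \<Rightarrow> 'a \<Rightarrow> 'a \<Rightarrow> 'a set" where
  "dir_normal_cone A y u = {v. \<exists>(t::nat \<Rightarrow> real) uk vk. (\<forall>k. t k > 0) \<and> t \<longlonglongrightarrow> 0 \<and>
      uk \<longlonglongrightarrow> u \<and> vk \<longlonglongrightarrow> v \<and> (\<forall>k. vk k \<in> frechet_normal_cone A (y + t k *\<^sub>R uk k))}"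

definition conv_dir_normal_cone :: "'a::real_inner set \<Rightarrow> 'a \<Rightarrow> 'a \<Rightarrow> 'a set" where
  "conv_dir_normal_cone A y u = closure (convex hull (dir_normal_cone A y u))"

text \<open>Multiplier set Lambda^c(x;d); nabla_x L(x,lam) = 0 written as a linear functional identity.\<close>
definition multipliers_c ::
  "('a \<Rightarrow> ('a \<Rightarrow>\<^sub>L real)) \<Rightarrow> ('a \<Rightarrow> ('a \<Rightarrow>\<^sub>L 'b::real_inner)) \<Rightarrow> ('a \<Rightarrow> 'b) \<Rightarrow> 'b set
     \<Rightarrow> 'a::real_normed_vector \<Rightarrow> 'a \<Rightarrow> 'b set" where
  "multipliers_c Df Dg g K x d =
     {lam. (\<forall>v. blinfun_apply (Df x) v + inner (blinfun_apply (Dg x) v) lam = 0) \<and>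
           lam \<in> conv_dir_normal_cone K (g x) (blinfun_apply (Dg x) d)}"

definition DirRCQ ::
  "('a \<Rightarrow> ('a \<Rightarrow>\<^sub>L 'b::real_inner)) \<Rightarrow> ('a \<Rightarrow> 'b) \<Rightarrow> 'b set \<Rightarrow> 'a::real_normed_vector \<Rightarrow> 'a \<Rightarrow> bool" where
  "DirRCQ Dg g K x d \<longleftrightarrow>
     (\<forall>lam. (\<forall>v. inner (blinfun_apply (Dg x) v) lam = 0) \<and>
            lam \<in> conv_dir_normal_cone K (g x) (blinfun_apply (Dg x) d) \<longrightarrow> lam = 0)"

definition support_fun :: "'a::real_inner set \<Rightarrow> 'a \<Rightarrow> ereal" where
  "support_fun A lam = (SUP u\<in>A. ereal (inner lam u))"

definition hessL ::
  "('a \<Rightarrow> ('a \<Rightarrow>\<^sub>L ('a \<Rightarrow>\<^sub>L real))) \<Rightarrow> ('a \<Rightarrow> ('a \<Rightarrow>\<^sub>L ('a \<Rightarrow>\<^sub>L 'b::real_inner)))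
     \<Rightarrow> 'a::real_normed_vector \<Rightarrow> 'b \<Rightarrow> 'a \<Rightarrow> real" where
  "hessL D2f D2g x lam d =
     blinfun_apply (blinfun_apply (D2f x) d) d + inner (blinfun_apply (blinfun_apply (D2g x) d) d) lam"

end

theory Submission
  imports Defs
begin

lemma taylor2:
  fixes F :: "'a::real_normed_vector \<Rightarrow> 'c::real_normed_vector" and DF :: "'a \<Rightarrow> ('a \<Rightarrow>\<^sub>L 'c)" and D2 :: "'a \<Rightarrow>\<^sub>L ('a \<Rightarrow>\<^sub>L 'c)"
  assumes dF: "\<And>y. (F has_derivative blinfun_apply (DF y)) (at y)"
    and d2F: "(DF has_derivative blinfun_apply D2) (at x)"
    and e: "e > 0"
  shows "\<exists>\<delta>>0. \<forall>h. norm h < \<delta> \<longrightarrow>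
     norm (F (x+h) - F x - DF x h - (1/2) *\<^sub>R (D2 h) h) \<le> e * (norm h)^2"
proof -
  from d2F e obtain \<delta> where dpos: "\<delta> > 0" and
    dd: "\<And>y. norm (y - x) < \<delta> \<Longrightarrow> norm (DF y - DF x - blinfun_apply D2 (y - x)) \<le> e * norm (y - x)"
    unfolding has_derivative_at_alt by blast
  show ?thesis
  proof (intro exI[of _ \<delta>] conjI allI impI dpos)
    fix h :: 'a assume h: "norm h < \<delta>"
    define G where "G s = F (x + s *\<^sub>R h) - s *\<^sub>R DF x h - (s^2/2) *\<^sub>R (D2 h) h" for s :: real
    define G' where "G' s = (\<lambda>t::real. t *\<^sub>R (DF (x + s *\<^sub>R h) h - DF x h - s *\<^sub>R (D2 h) h))" for s
    have derG: "(G has_derivative G' s) (at s within {0..1})" for s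
    proof -
      have 1: "((\<lambda>s. x + s *\<^sub>R h) has_derivative (\<lambda>t. t *\<^sub>R h)) (at s within {0..1})"
        by (auto intro!: derivative_eq_intros)
      have 2: "((\<lambda>s. F (x + s *\<^sub>R h)) has_derivative (\<lambda>t. DF (x + s *\<^sub>R h) (t *\<^sub>R h))) (at s within {0..1})"
        using has_derivative_compose[OF 1 has_derivative_at_withinI[OF dF]] by (simp add: o_def)
      have 3: "((\<lambda>s. (s^2/2) *\<^sub>R (D2 h) h) has_derivative (\<lambda>t. (t * s) *\<^sub>R (D2 h) h)) (at s within {0..1})"
        by (auto intro!: derivative_eq_intros simp: algebra_simps)
      have 4: "((\<lambda>s. s *\<^sub>R DF x h) has_derivative (\<lambda>t. t *\<^sub>R DF x h)) (at s within {0..1})"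
        by (auto intro!: derivative_eq_intros)
      have "(G has_derivative (\<lambda>t. DF (x + s *\<^sub>R h) (t *\<^sub>R h) - t *\<^sub>R DF x h - (t * s) *\<^sub>R (D2 h) h)) (at s within {0..1})"
        unfolding G_def by (intro has_derivative_diff 2 3 4)
      moreover have "(\<lambda>t. DF (x + s *\<^sub>R h) (t *\<^sub>R h) - t *\<^sub>R DF x h - (t * s) *\<^sub>R (D2 h) h) = G' s"
        by (auto simp: G'_def fun_eq_iff blinfun.scaleR_right algebra_simps)
      ultimately show ?thesis by simp
    qed
    have bnd: "onorm (G' s) \<le> e * (norm h)^2" if s: "s \<in> {0..1}" for s
    proof -
      have ns: "norm (s *\<^sub>R h) < \<delta>" using s h
        using mult_left_le_one_le[of "norm h" s] by auto
      have "norm (DF (x + s *\<^sub>R h) - DF x - D2 (s *\<^sub>R h)) \<le> e * norm (s *\<^sub>R h)"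
        using dd[of "x + s *\<^sub>R h"] ns by simp
      also have "\<dots> \<le> e * norm h" using s e by (auto intro!: mult_left_mono mult_left_le_one_le)
      finally have A: "norm (DF (x + s *\<^sub>R h) - DF x - D2 (s *\<^sub>R h)) \<le> e * norm h" .
      have "DF (x + s *\<^sub>R h) h - DF x h - s *\<^sub>R (D2 h) h = (DF (x + s *\<^sub>R h) - DF x - D2 (s *\<^sub>R h)) h"
        by (simp add: blinfun.diff_left blinfun.scaleR_left blinfun.scaleR_right)
      hence "norm (DF (x + s *\<^sub>R h) h - DF x h - s *\<^sub>R (D2 h) h) \<le> norm (DF (x + s *\<^sub>R h) - DF x - D2 (s *\<^sub>R h)) * norm h"
        by (simp add: norm_blinfun)
      also have "\<dots> \<le> e * norm h * norm h" using A by (simp add: mult_right_mono)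
      finally have B: "norm (DF (x + s *\<^sub>R h) h - DF x h - s *\<^sub>R (D2 h) h) \<le> e * (norm h)^2"
        by (simp add: power2_eq_square mult.assoc)
      show ?thesis unfolding G'_def
        by (rule onorm_bound) (use B e in \<open>auto intro: mult_left_mono simp: mult.commute\<close>)
    qed
    have "norm (G 1 - G 0) \<le> e * (norm h)^2 * norm (1 - 0::real)"
      by (rule differentiable_bound[OF convex_real_interval(5) derG bnd]) auto
    moreover have "G 1 - G 0 = F (x+h) - F x - DF x h - (1/2) *\<^sub>R (D2 h) h"
      by (simp add: G_def)
    ultimately show "norm (F (x+h) - F x - DF x h - (1/2) *\<^sub>R (D2 h) h) \<le> e * (norm h)^2" by simp
  qed
qed

lemma rem_to_zero:
  fixes R :: "'a::real_normed_vector \<Rightarrow> 'c::real_normed_vector"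
  assumes R: "\<forall>e>0. \<exists>\<delta>>0. \<forall>h. norm h < \<delta> \<longrightarrow> norm (R h) \<le> e * norm h ^ n"
    and h: "hk \<longlonglongrightarrow> 0"
    and bd: "eventually (\<lambda>k. norm (hk k) \<le> B * s k) sequentially"
    and s: "\<forall>k. s k > 0"
  shows "(\<lambda>k. inverse (s k ^ n) *\<^sub>R R (hk k)) \<longlonglongrightarrow> 0"
proof (rule LIMSEQ_I)
  fix \<epsilon> :: real assume \<epsilon>: "\<epsilon> > 0"
  define e where "e = \<epsilon> / (\<bar>B\<bar>^n + 1)"
  have e: "e > 0" unfolding e_def by (intro divide_pos_pos \<epsilon> add_nonneg_pos) auto
  obtain \<delta> where \<delta>: "\<delta> > 0" "\<And>h. norm h < \<delta> \<Longrightarrow> norm (R h) \<le> e * norm h ^ n"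
    using R e by blast
  have "eventually (\<lambda>k. norm (hk k) < \<delta>) sequentially"
    using order_tendstoD(2)[OF tendsto_norm_zero[OF h] \<delta>(1)] by simp
  with bd have "eventually (\<lambda>k. norm (inverse (s k ^ n) *\<^sub>R R (hk k) - 0) < \<epsilon>) sequentially"
  proof eventually_elim
    case (elim k)
    have sk: "s k > 0" using s by auto
    have "norm (R (hk k)) \<le> e * norm (hk k) ^ n" using \<delta>(2) elim by auto
    also have "\<dots> \<le> e * (\<bar>B\<bar> * s k) ^ n"
    proof -
      have "norm (hk k) \<le> \<bar>B\<bar> * s k" using elim(1) sk by (smt (verit) abs_ge_self mult_right_mono)
      thus ?thesis using e by (intro mult_left_mono power_mono) auto
    qed
    also have "\<dots> = e * \<bar>B\<bar>^n * s k ^ n" by (simp add: power_mult_distrib)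
    finally have A: "norm (R (hk k)) \<le> e * \<bar>B\<bar>^n * s k ^ n" .
    have "norm (inverse (s k ^ n) *\<^sub>R R (hk k)) = norm (R (hk k)) / s k ^ n"
      using sk by (simp add: divide_inverse mult.commute)
    also have "\<dots> \<le> e * \<bar>B\<bar>^n" using A sk by (simp add: divide_le_eq)
    also have "\<dots> < \<epsilon>" using \<epsilon> unfolding e_def by (simp add: field_simps add_pos_nonneg)
    finally show ?case by simp
  qed
  thus "\<exists>no. \<forall>k\<ge>no. norm (inverse (s k ^ n) *\<^sub>R R (hk k) - 0) < \<epsilon>"
    by (simp add: eventually_sequentially)
qed

lemma deriv_seq:
  fixes F :: "'a::real_normed_vector \<Rightarrow> 'c::real_normed_vector"
  assumes dF: "(F has_derivative DF) (at x)" and t: "t \<longlonglongrightarrow> 0" "\<forall>k. t k > 0"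
    and z: "\<zeta> \<longlonglongrightarrow> z"
  shows "(\<lambda>k. inverse (t k) *\<^sub>R (F (x + t k *\<^sub>R \<zeta> k) - F x)) \<longlonglongrightarrow> DF z"
proof -
  have bl: "bounded_linear DF" using dF by (simp add: has_derivative_def)
  define R where "R h = F (x + h) - F x - DF h" for h
  have Rb: "\<forall>e>0. \<exists>\<delta>>0. \<forall>h. norm h < \<delta> \<longrightarrow> norm (R h) \<le> e * norm h ^ 1"
  proof (intro allI impI)
    fix e :: real assume "e > 0"
    then obtain d where d1: "d > 0" and d2: "\<And>y. norm (y - x) < d \<Longrightarrow> norm (F y - F x - DF (y - x)) \<le> e * norm (y - x)"
      using dF unfolding has_derivative_at_alt by blast
    show "\<exists>\<delta>>0. \<forall>h. norm h < \<delta> \<longrightarrow> norm (R h) \<le> e * norm h ^ 1"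
    proof (intro exI[of _ d] conjI allI impI d1)
      fix h :: 'a assume "norm h < d" thus "norm (R h) \<le> e * norm h ^ 1" using d2[of "x+h"] by (simp add: R_def)
    qed
  qed
  have h0: "(\<lambda>k. t k *\<^sub>R \<zeta> k) \<longlonglongrightarrow> 0"
    using tendsto_scaleR[OF t(1) z] by simp
  have "eventually (\<lambda>k. norm (\<zeta> k) \<le> norm z + 1) sequentially"
    using tendstoD[OF z zero_less_one]
  proof eventually_elim
    case (elim k)
    have "norm (\<zeta> k) \<le> norm z + norm (\<zeta> k - z)" by (metis add.commute diff_add_cancel norm_triangle_ineq)
    thus ?case using elim by (simp add: dist_norm)
  qed
  hence bd: "eventually (\<lambda>k. norm (t k *\<^sub>R \<zeta> k) \<le> (norm z + 1) * t k) sequentially"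
  proof eventually_elim
    case (elim k)
    have "t k > 0" using t(2) by auto
    thus ?case using elim by (simp add: mult.commute mult_left_mono)
  qed
  have r0: "(\<lambda>k. inverse (t k ^ 1) *\<^sub>R R (t k *\<^sub>R \<zeta> k)) \<longlonglongrightarrow> 0"
    by (rule rem_to_zero[OF Rb h0 bd t(2)])
  have l: "(\<lambda>k. DF (\<zeta> k)) \<longlonglongrightarrow> DF z"
    using bounded_linear.tendsto[OF bl z] .
  have eq: "inverse (t k) *\<^sub>R (F (x + t k *\<^sub>R \<zeta> k) - F x) = DF (\<zeta> k) + inverse (t k ^ 1) *\<^sub>R R (t k *\<^sub>R \<zeta> k)" for k
  proof -
    have "t k \<noteq> 0" using t(2) by (metis less_irrefl)
    thus ?thesis
      by (simp add: R_def linear_simps(5)[OF bl] scaleR_diff_right algebra_simps)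
  qed
  show ?thesis unfolding eq using tendsto_add[OF l r0] by simp
qed

lemma taylor_R2:
  fixes F :: "'a::real_normed_vector \<Rightarrow> 'c::real_normed_vector" and DF :: "'a \<Rightarrow> ('a \<Rightarrow>\<^sub>L 'c)" and D2 :: "'a \<Rightarrow>\<^sub>L ('a \<Rightarrow>\<^sub>L 'c)"
  assumes dF: "\<And>y. (F has_derivative blinfun_apply (DF y)) (at y)"
    and d2F: "(DF has_derivative blinfun_apply D2) (at x)"
  shows "\<forall>e>0. \<exists>\<delta>>0. \<forall>h. norm h < \<delta> \<longrightarrow>
     norm (F (x+h) - F x - DF x h - (1/2) *\<^sub>R (D2 h) h) \<le> e * norm h ^ 2"
  using taylor2[OF dF d2F] by blast

lemma quad_seq:
  fixes D2 :: "'a::real_normed_vector \<Rightarrow>\<^sub>L ('a \<Rightarrow>\<^sub>L 'c::real_normed_vector)"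
  assumes "q \<longlonglongrightarrow> d"
  shows "(\<lambda>k. D2 (q k) (q k)) \<longlonglongrightarrow> D2 d d"
  using blinfun.tendsto[OF blinfun.tendsto[OF tendsto_const assms] assms] .

lemma seqT2:
  fixes F :: "'a::real_normed_vector \<Rightarrow> 'c::real_normed_vector" and DF :: "'a \<Rightarrow> ('a \<Rightarrow>\<^sub>L 'c)" and D2 :: "'a \<Rightarrow>\<^sub>L ('a \<Rightarrow>\<^sub>L 'c)"
  assumes dF: "\<And>y. (F has_derivative blinfun_apply (DF y)) (at y)"
    and d2F: "(DF has_derivative blinfun_apply D2) (at x)"
    and t: "t \<longlonglongrightarrow> 0" "\<forall>k. t k > 0" and z: "zk \<longlonglongrightarrow> z"
  shows "(\<lambda>k. inverse ((1/2) * (t k)^2) *\<^sub>R (F (x + t k *\<^sub>R d + ((1/2) * (t k)^2) *\<^sub>R zk k) - F x - t k *\<^sub>R DF x d))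
           \<longlonglongrightarrow> DF x z + D2 d d"
proof -
  define R where "R h = F (x+h) - F x - DF x h - (1/2) *\<^sub>R (D2 h) h" for h
  define q where "q k = d + ((1/2) * t k) *\<^sub>R zk k" for k
  have q: "q \<longlonglongrightarrow> d" unfolding q_def
    using tendsto_add[OF tendsto_const tendsto_scaleR[OF tendsto_mult[OF tendsto_const t(1)] z], of d "1/2"] by simp
  have h0: "(\<lambda>k. t k *\<^sub>R q k) \<longlonglongrightarrow> 0" using tendsto_scaleR[OF t(1) q] by simp
  have "eventually (\<lambda>k. norm (q k) \<le> norm d + 1) sequentially"
    using tendstoD[OF q zero_less_one]
  proof eventually_elim
    case (elim k)
    have "norm (q k) \<le> norm d + norm (q k - d)" by (metis add.commute diff_add_cancel norm_triangle_ineq)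
    thus ?case using elim by (simp add: dist_norm)
  qed
  hence bd: "eventually (\<lambda>k. norm (t k *\<^sub>R q k) \<le> (norm d + 1) * t k) sequentially"
  proof eventually_elim
    case (elim k)
    have "t k > 0" using t(2) by auto
    thus ?case using elim by (simp add: mult.commute mult_left_mono)
  qed
  have r0: "(\<lambda>k. inverse (t k ^ 2) *\<^sub>R R (t k *\<^sub>R q k)) \<longlonglongrightarrow> 0"
    by (rule rem_to_zero[OF taylor_R2[OF dF d2F, folded R_def] h0 bd t(2)])
  have eq: "inverse ((1/2) * (t k)^2) *\<^sub>R (F (x + t k *\<^sub>R d + ((1/2) * (t k)^2) *\<^sub>R zk k) - F x - t k *\<^sub>R DF x d)
      = DF x (zk k) + D2 (q k) (q k) + 2 *\<^sub>R (inverse (t k ^ 2) *\<^sub>R R (t k *\<^sub>R q k))" for k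
  proof -
    have tk: "t k \<noteq> 0" using t(2) by (metis less_irrefl)
    have hq: "t k *\<^sub>R q k = t k *\<^sub>R d + ((1/2) * (t k)^2) *\<^sub>R zk k"
      by (simp add: q_def scaleR_add_right power2_eq_square algebra_simps)
    have "F (x + t k *\<^sub>R d + ((1/2) * (t k)^2) *\<^sub>R zk k) - F x - t k *\<^sub>R DF x d
       = DF x (t k *\<^sub>R q k) - t k *\<^sub>R DF x d + (1/2) *\<^sub>R (D2 (t k *\<^sub>R q k)) (t k *\<^sub>R q k) + R (t k *\<^sub>R q k)"
      by (simp add: R_def hq add.assoc)
    also have "DF x (t k *\<^sub>R q k) - t k *\<^sub>R DF x d = ((1/2) * (t k)^2) *\<^sub>R DF x (zk k)"
      by (simp add: hq blinfun.add_right blinfun.scaleR_right)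
    also have "(1/2) *\<^sub>R (D2 (t k *\<^sub>R q k)) (t k *\<^sub>R q k) = ((1/2) * (t k)^2) *\<^sub>R D2 (q k) (q k)"
      by (simp add: blinfun.scaleR_right blinfun.scaleR_left power2_eq_square)
    finally show ?thesis using tk
      by (simp add: scaleR_add_right field_simps)
  qed
  show ?thesis unfolding eq
    using tendsto_add[OF tendsto_add[OF bounded_linear.tendsto[OF blinfun.bounded_linear_right z] quad_seq[OF q]]
        tendsto_scaleR[OF tendsto_const r0, of 2]] by simp
qed

lemma seqTpp:
  fixes F :: "'a::real_normed_vector \<Rightarrow> 'c::real_normed_vector" and DF :: "'a \<Rightarrow> ('a \<Rightarrow>\<^sub>L 'c)" and D2 :: "'a \<Rightarrow>\<^sub>L ('a \<Rightarrow>\<^sub>L 'c)"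
  assumes dF: "\<And>y. (F has_derivative blinfun_apply (DF y)) (at y)"
    and d2F: "(DF has_derivative blinfun_apply D2) (at x)"
    and t: "t \<longlonglongrightarrow> 0" "\<forall>k. t k > 0" and r: "r \<longlonglongrightarrow> 0" "\<forall>k. r k > 0"
    and tr: "(\<lambda>k. t k / r k) \<longlonglongrightarrow> 0" and z: "zk \<longlonglongrightarrow> z"
  shows "(\<lambda>k. inverse ((1/2) * t k * r k) *\<^sub>R (F (x + t k *\<^sub>R d + ((1/2) * t k * r k) *\<^sub>R zk k) - F x - t k *\<^sub>R DF x d))
           \<longlonglongrightarrow> DF x z"
proof -
  define R where "R h = F (x+h) - F x - DF x h - (1/2) *\<^sub>R (D2 h) h" for h
  define q where "q k = d + ((1/2) * r k) *\<^sub>R zk k" for k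
  have q: "q \<longlonglongrightarrow> d" unfolding q_def
    using tendsto_add[OF tendsto_const tendsto_scaleR[OF tendsto_mult[OF tendsto_const r(1)] z], of d "1/2"] by simp
  have h0: "(\<lambda>k. t k *\<^sub>R q k) \<longlonglongrightarrow> 0" using tendsto_scaleR[OF t(1) q] by simp
  have "eventually (\<lambda>k. norm (q k) \<le> norm d + 1) sequentially"
    using tendstoD[OF q zero_less_one]
  proof eventually_elim
    case (elim k)
    have "norm (q k) \<le> norm d + norm (q k - d)" by (metis add.commute diff_add_cancel norm_triangle_ineq)
    thus ?case using elim by (simp add: dist_norm)
  qed
  hence bd: "eventually (\<lambda>k. norm (t k *\<^sub>R q k) \<le> (norm d + 1) * t k) sequentially"
  proof eventually_elim
    case (elim k)
    have "t k > 0" using t(2) by auto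
    thus ?case using elim by (simp add: mult.commute mult_left_mono)
  qed
  have r0: "(\<lambda>k. inverse (t k ^ 2) *\<^sub>R R (t k *\<^sub>R q k)) \<longlonglongrightarrow> 0"
    by (rule rem_to_zero[OF taylor_R2[OF dF d2F, folded R_def] h0 bd t(2)])
  have eq: "inverse ((1/2) * t k * r k) *\<^sub>R (F (x + t k *\<^sub>R d + ((1/2) * t k * r k) *\<^sub>R zk k) - F x - t k *\<^sub>R DF x d)
      = DF x (zk k) + (t k / r k) *\<^sub>R D2 (q k) (q k) + (2 * (t k / r k)) *\<^sub>R (inverse (t k ^ 2) *\<^sub>R R (t k *\<^sub>R q k))" for k
  proof -
    have tk: "t k \<noteq> 0" using t(2) by (metis less_irrefl)
    have rk: "r k \<noteq> 0" using r(2) by (metis less_irrefl)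
    have hq: "t k *\<^sub>R q k = t k *\<^sub>R d + ((1/2) * t k * r k) *\<^sub>R zk k"
      by (simp add: q_def scaleR_add_right algebra_simps)
    have "F (x + t k *\<^sub>R d + ((1/2) * t k * r k) *\<^sub>R zk k) - F x - t k *\<^sub>R DF x d
       = DF x (t k *\<^sub>R q k) - t k *\<^sub>R DF x d + (1/2) *\<^sub>R (D2 (t k *\<^sub>R q k)) (t k *\<^sub>R q k) + R (t k *\<^sub>R q k)"
      by (simp add: R_def hq add.assoc)
    also have "DF x (t k *\<^sub>R q k) - t k *\<^sub>R DF x d = ((1/2) * t k * r k) *\<^sub>R DF x (zk k)"
      by (simp add: hq blinfun.add_right blinfun.scaleR_right)
    also have "(1/2) *\<^sub>R (D2 (t k *\<^sub>R q k)) (t k *\<^sub>R q k) = ((1/2) * (t k)^2) *\<^sub>R D2 (q k) (q k)"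
      by (simp add: blinfun.scaleR_right blinfun.scaleR_left power2_eq_square)
    finally show ?thesis using tk rk
      by (simp add: scaleR_add_right field_simps power2_eq_square)
  qed
  have a: "(\<lambda>k. (t k / r k) *\<^sub>R D2 (q k) (q k)) \<longlonglongrightarrow> 0"
    using tendsto_scaleR[OF tr quad_seq[OF q]] by simp
  have b: "(\<lambda>k. (2 * (t k / r k)) *\<^sub>R (inverse (t k ^ 2) *\<^sub>R R (t k *\<^sub>R q k))) \<longlonglongrightarrow> 0"
    using tendsto_scaleR[OF tendsto_mult[OF tendsto_const tr] r0] by simp
  show ?thesis unfolding eq
    using tendsto_add[OF tendsto_add[OF bounded_linear.tendsto[OF blinfun.bounded_linear_right z] a] b] by simp
qed

lemma prox_frechet:
  fixes K :: "'b::real_inner set"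
  assumes q: "q \<in> K" and near: "\<forall>y\<in>K. dist p q \<le> dist p y"
  shows "p - q \<in> frechet_normal_cone K q"
proof -
  have "\<exists>r>0. \<forall>y'\<in>K. y' \<noteq> q \<and> norm (y' - q) < r \<longrightarrow> inner (p - q) (y' - q) / norm (y' - q) \<le> e"
    if e: "e > 0" for e
  proof (intro exI[of _ "2*e"] conjI ballI impI)
    show "0 < 2*e" using e by simp
    fix y' assume y': "y' \<in> K" "y' \<noteq> q \<and> norm (y' - q) < 2 * e"
    have "(norm (p - q))^2 \<le> (norm (p - y'))^2"
      using near y' by (simp add: dist_norm power_mono)
    moreover have "p - y' = (p - q) - (y' - q)" by simp
    ultimately have "(norm (p - q))^2 \<le> (norm ((p - q) - (y' - q)))^2" by metis
    hence "2 * inner (p - q) (y' - q) \<le> (norm (y' - q))^2"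
      by (simp add: power2_norm_eq_inner inner_diff_left inner_diff_right inner_commute)
    hence "inner (p - q) (y' - q) \<le> norm (y' - q) * (norm (y' - q) / 2)"
      by (simp add: power2_eq_square)
    also have "\<dots> \<le> norm (y' - q) * e" using y' by (intro mult_left_mono) auto
    finally show "inner (p - q) (y' - q) / norm (y' - q) \<le> e"
      using y' by (simp add: divide_le_eq mult.commute)
  qed
  thus ?thesis using q by (simp add: frechet_normal_cone_def)
qed

lemma frechet_scale:
  fixes K :: "'b::real_inner set"
  assumes v: "v \<in> frechet_normal_cone K y" and s: "s \<ge> 0"
  shows "s *\<^sub>R v \<in> frechet_normal_cone K y"
proof (cases "s = 0")
  case True
  thus ?thesis using v by (auto simp: frechet_normal_cone_def split: if_splits intro: exI[of _ 1])
next
  case False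
  hence sp: "s > 0" using s by simp
  have yK: "y \<in> K" using v by (simp add: frechet_normal_cone_def split: if_splits)
  have "\<exists>r>0. \<forall>y'\<in>K. y' \<noteq> y \<and> norm (y' - y) < r \<longrightarrow> inner (s *\<^sub>R v) (y' - y) / norm (y' - y) \<le> e"
    if e: "e > 0" for e
  proof -
    have es: "e / s > 0" using e sp by simp
    have "\<forall>e>0. \<exists>r>0. \<forall>y'\<in>K. y' \<noteq> y \<and> norm (y' - y) < r \<longrightarrow> inner v (y' - y) / norm (y' - y) \<le> e"
      using v yK by (simp add: frechet_normal_cone_def)
    from this[rule_format, OF es] obtain r where r: "r > 0" "\<forall>y'\<in>K. y' \<noteq> y \<and> norm (y' - y) < r \<longrightarrow> inner v (y' - y) / norm (y' - y) \<le> e / s"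
      by blast
    show ?thesis
    proof (intro exI[of _ r] conjI ballI impI r(1))
      fix y' assume "y' \<in> K" "y' \<noteq> y \<and> norm (y' - y) < r"
      hence "inner v (y' - y) / norm (y' - y) \<le> e / s" using r by auto
      hence "s * (inner v (y' - y) / norm (y' - y)) \<le> e" using sp by (simp add: field_simps)
      thus "inner (s *\<^sub>R v) (y' - y) / norm (y' - y) \<le> e" by simp
    qed
  qed
  thus ?thesis using yK by (simp add: frechet_normal_cone_def)
qed

lemma frechet_zero:
  fixes K :: "'b::real_inner set"
  assumes "y \<in> K" shows "0 \<in> frechet_normal_cone K y"
  using assms by (auto simp: frechet_normal_cone_def intro: exI[of _ 1])

lemma limit_normal:
  fixes K :: "'b::real_inner set"
  assumes t: "t \<longlonglongrightarrow> 0" "\<forall>k. t k > 0"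
    and pu: "(\<lambda>k. inverse (t k) *\<^sub>R (p k - y)) \<longlonglongrightarrow> u"
    and n: "\<forall>k. n k \<in> frechet_normal_cone K (p k)" and nl: "n \<longlonglongrightarrow> l"
  shows "l \<in> dir_normal_cone K y u"
proof -
  have "y + t k *\<^sub>R (inverse (t k) *\<^sub>R (p k - y)) = p k" for k
  proof -
    have "t k \<noteq> 0" using t(2) by (metis less_irrefl)
    thus ?thesis by simp
  qed
  thus ?thesis unfolding dir_normal_cone_def
    using t pu n nl by (intro CollectI exI[of _ t] exI[of _ "\<lambda>k. inverse (t k) *\<^sub>R (p k - y)"] exI[of _ n]) auto
qed

lemma dir_scale:
  fixes K :: "'b::real_inner set"
  assumes "v \<in> dir_normal_cone K y u" "s \<ge> 0"
  shows "s *\<^sub>R v \<in> dir_normal_cone K y u"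
proof -
  from assms(1) obtain t uk vk where A: "\<forall>k. t k > 0" "t \<longlonglongrightarrow> 0" "uk \<longlonglongrightarrow> u" "vk \<longlonglongrightarrow> v"
    "\<forall>k. vk k \<in> frechet_normal_cone K (y + t k *\<^sub>R uk k)"
    by (auto simp: dir_normal_cone_def)
  show ?thesis unfolding dir_normal_cone_def
    using A assms(2) by (intro CollectI exI[of _ t] exI[of _ uk] exI[of _ "\<lambda>k. s *\<^sub>R vk k"])
      (auto intro: frechet_scale tendsto_scaleR)
qed

lemma dir_zero:
  fixes K :: "'b::real_inner set"
  assumes "u \<in> tangent_cone K y"
  shows "0 \<in> dir_normal_cone K y u"
proof -
  from assms obtain t dk where A: "\<forall>k. t k > 0" "t \<longlonglongrightarrow> 0" "dk \<longlonglongrightarrow> u" "\<forall>k. y + t k *\<^sub>R dk k \<in> K"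
    by (auto simp: tangent_cone_def)
  show ?thesis unfolding dir_normal_cone_def
    using A by (intro CollectI exI[of _ t] exI[of _ dk] exI[of _ "\<lambda>k. 0"]) (auto intro: frechet_zero)
qed

lemma conv_cone_props:
  fixes K :: "'b::euclidean_space set"
  assumes "u \<in> tangent_cone K y"
  defines "C \<equiv> conv_dir_normal_cone K y u"
  shows "closed C" "convex C" "0 \<in> C" "\<And>c s. c \<in> C \<Longrightarrow> s \<ge> 0 \<Longrightarrow> s *\<^sub>R c \<in> C"
    "dir_normal_cone K y u \<subseteq> C"
proof -
  let ?N = "dir_normal_cone K y u"
  show "closed C" "convex C" unfolding C_def conv_dir_normal_cone_def
    by (auto intro: convex_closure convex_convex_hull)
  show NC: "?N \<subseteq> C" unfolding C_def conv_dir_normal_cone_def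
    by (meson closure_subset hull_subset subset_trans)
  show "0 \<in> C" using NC dir_zero[OF assms(1)] by auto
  fix c s assume c: "c \<in> C" and s: "(s::real) \<ge> 0"
  show "s *\<^sub>R c \<in> C"
  proof (cases "s = 0")
    case True thus ?thesis using NC dir_zero[OF assms(1)] by auto
  next
    case False
    have sub: "(*\<^sub>R) s ` ?N \<subseteq> ?N" using dir_scale s by auto
    have "convex hull ((*\<^sub>R) s ` ?N) \<subseteq> convex hull ?N" by (rule hull_mono[OF sub])
    hence "(*\<^sub>R) s ` (convex hull ?N) \<subseteq> convex hull ?N"
      using convex_hull_scaling[of s ?N] by simp
    hence "(*\<^sub>R) s ` closure (convex hull ?N) \<subseteq> closure (convex hull ?N)"
      using closure_scaleR[of s "convex hull ?N"] closure_mono by metis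
    thus ?thesis using c unfolding C_def conv_dir_normal_cone_def by auto
  qed
qed

lemma sep:
  fixes A :: "'a::euclidean_space \<Rightarrow>\<^sub>L 'b::euclidean_space" and a :: "'a \<Rightarrow>\<^sub>L real"
    and h :: 'b and e :: real and C Kd :: "'b set"
  assumes Ccl: "closed C" and Ccv: "convex C" and C0: "0 \<in> C"
    and Ccone: "\<And>c s. c \<in> C \<Longrightarrow> s \<ge> 0 \<Longrightarrow> s *\<^sub>R c \<in> C"
    and qual: "\<And>l. l \<in> C \<Longrightarrow> (\<forall>v. inner (A v) l = 0) \<Longrightarrow> l = 0"
    and Kdc: "convex Kd" and Kdne: "Kd \<noteq> {}"
    and hyp: "\<And>z w. w \<in> Kd \<Longrightarrow> (\<forall>n\<in>C. inner n (A z + h - w) \<le> 0) \<Longrightarrow> a z + e \<ge> 0"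
  shows "\<exists>l\<in>C. (\<forall>v. a v + inner (A v) l = 0) \<and> (\<forall>w\<in>Kd. e + inner l (h - w) \<ge> 0)"
proof -
  define Cp where "Cp = {v. \<forall>n\<in>C. inner n v \<le> 0}"
  have Cp0: "0 \<in> Cp" by (simp add: Cp_def)
  have Cpcone: "s *\<^sub>R v \<in> Cp" if "v \<in> Cp" "s \<ge> 0" for v s
    using that by (auto simp: Cp_def mult_nonneg_nonpos)
  define W where "W = {(A z + h - w - v, a z + e + r) | z w v r. w \<in> Kd \<and> v \<in> Cp \<and> r \<ge> 0}"
  define R where "R = {(0::'b, s) | s::real. s < 0}"
  have cW: "convex W" unfolding convex_def
  proof (intro ballI allI impI)
    fix x y and u v :: real assume x: "x \<in> W" and y: "y \<in> W" and uv: "0 \<le> u" "0 \<le> v" "u + v = 1"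
    from x obtain z1 w1 v1 r1 where 1: "x = (A z1 + h - w1 - v1, a z1 + e + r1)" "w1 \<in> Kd" "v1 \<in> Cp" "r1 \<ge> 0"
      unfolding W_def by blast
    from y obtain z2 w2 v2 r2 where 2: "y = (A z2 + h - w2 - v2, a z2 + e + r2)" "w2 \<in> Kd" "v2 \<in> Cp" "r2 \<ge> 0"
      unfolding W_def by blast
    have w: "u *\<^sub>R w1 + v *\<^sub>R w2 \<in> Kd" using Kdc 1(2) 2(2) uv unfolding convex_def by blast
    have vv: "u *\<^sub>R v1 + v *\<^sub>R v2 \<in> Cp" using 1(3) 2(3) uv
      by (auto simp: Cp_def inner_add_right intro!: add_nonpos_nonpos mult_nonneg_nonpos)
    have r: "u * r1 + v * r2 \<ge> 0" using uv 1(4) 2(4) by simp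
    have hh: "h = u *\<^sub>R h + v *\<^sub>R h" using uv by (metis scaleR_add_left scaleR_one)
    have ee: "e = u * e + v * e" using uv by (metis distrib_right mult_1)
    have "u *\<^sub>R x + v *\<^sub>R y = (A (u *\<^sub>R z1 + v *\<^sub>R z2) + h - (u *\<^sub>R w1 + v *\<^sub>R w2) - (u *\<^sub>R v1 + v *\<^sub>R v2),
        a (u *\<^sub>R z1 + v *\<^sub>R z2) + e + (u * r1 + v * r2))"
    proof -
      have v1: "v = 1 - u" using uv(3) by simp
      show ?thesis unfolding 1(1) 2(1) v1
        by (simp add: blinfun.add_right blinfun.scaleR_right blinfun.diff_right scaleR_diff_right scaleR_add_right scaleR_diff_left algebra_simps)
    qed
    thus "u *\<^sub>R x + v *\<^sub>R y \<in> W" unfolding W_def using w vv r by blast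
  qed
  have cR: "convex R" unfolding convex_def R_def
  proof (intro ballI allI impI)
    fix x y and u v :: real assume x: "x \<in> {(0::'b, s) | s::real. s < 0}" and y: "y \<in> {(0::'b, s) | s::real. s < 0}"
      and uv: "0 \<le> u" "0 \<le> v" "u + v = 1"
    from x y obtain s1 s2 where "x = (0, s1)" "y = (0, s2)" "s1 < 0" "s2 < 0" by blast
    moreover have "u * s1 + v * s2 < 0" using uv \<open>s1 < 0\<close> \<open>s2 < 0\<close>
      by (smt (verit) mult_nonneg_nonpos mult_pos_neg)
    ultimately show "u *\<^sub>R x + v *\<^sub>R y \<in> {(0::'b, s) | s::real. s < 0}" by simp
  qed
  obtain w0 where w0: "w0 \<in> Kd" using Kdne by blast
  have Wne: "W \<noteq> {}" unfolding W_def using w0 Cp0 by blast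
  have Rne: "R \<noteq> {}" unfolding R_def by (auto intro: exI[of _ "-1"])
  have disj: "R \<inter> W = {}"
  proof (rule ccontr)
    assume "R \<inter> W \<noteq> {}"
    then obtain s z w v r where s: "s < 0" and eq: "(0, s) = (A z + h - w - v, a z + e + r)"
      and w: "w \<in> Kd" and v: "v \<in> Cp" and r: "r \<ge> 0"
      unfolding R_def W_def by blast
    have "v = A z + h - w" using eq by (simp add: algebra_simps)
    hence "\<forall>n\<in>C. inner n (A z + h - w) \<le> 0" using v by (simp add: Cp_def)
    hence "a z + e \<ge> 0" using hyp w by blast
    thus False using eq s r by simp
  qed
  obtain c b where cb: "c \<noteq> 0" "\<forall>x\<in>R. inner c x \<le> b" "\<forall>x\<in>W. inner c x \<ge> b"
    using separating_hyperplane_sets[OF cR cW Rne Wne disj] by blast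
  obtain \<mu> \<beta> where c: "c = (\<mu>, \<beta>)" by fastforce
  have Rb: "\<beta> * s \<le> b" if "s < 0" for s
    using cb(2) that unfolding R_def c by (auto simp: inner_Pair)
  have \<beta>: "\<beta> \<ge> 0"
  proof (rule ccontr)
    assume "\<not> \<beta> \<ge> 0"
    hence "\<beta> < 0" by simp
    have "\<beta> * (- (\<bar>b\<bar> + 1) / (- \<beta>)) \<le> b" by (rule Rb, rule divide_neg_pos) (use \<open>\<beta> < 0\<close> in auto)
    moreover have "\<beta> * (- (\<bar>b\<bar> + 1) / (- \<beta>)) = \<bar>b\<bar> + 1" using \<open>\<beta> < 0\<close> by simp
    ultimately show False by linarith
  qed
  have b0: "b \<ge> 0"
  proof (rule ccontr)
    assume "\<not> b \<ge> 0"
    hence bn: "b < 0" by simp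
    have "\<beta> * (b / (2 * \<beta> + 2)) \<le> b" by (rule Rb) (use bn \<beta> in \<open>simp add: divide_neg_pos\<close>)
    hence "\<beta> * b \<le> b * (2 * \<beta> + 2)" using \<beta> by (simp add: field_simps)
    moreover have "b * (\<beta> + 2) < 0" using bn \<beta> by (intro mult_neg_pos) auto
    ultimately show False by (simp add: algebra_simps)
  qed
  have Wb: "inner \<mu> (A z + h - w - v) + \<beta> * (a z + e + r) \<ge> b" if "w \<in> Kd" "v \<in> Cp" "r \<ge> 0" for z w v r
    using cb(3) that unfolding W_def c by (force simp: inner_Pair)
  have muC: "\<mu> \<in> C"
  proof (rule ccontr)
    assume "\<mu> \<notin> C"
    then obtain c0 b0 where c0: "inner c0 \<mu> < b0" "\<forall>x\<in>C. inner c0 x > b0"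
      using separating_hyperplane_closed_point[OF Ccv Ccl] by blast
    have b00: "b0 < 0" using c0(2) C0 by auto
    have pos: "inner c0 x \<ge> 0" if "x \<in> C" for x
    proof (rule ccontr)
      assume "\<not> inner c0 x \<ge> 0"
      hence neg: "inner c0 x < 0" by simp
      have "(b0 / inner c0 x) *\<^sub>R x \<in> C" using Ccone[OF that] b00 neg by (simp add: divide_nonpos_neg)
      hence "inner c0 ((b0 / inner c0 x) *\<^sub>R x) > b0" using c0(2) by blast
      thus False using neg by simp
    qed
    have mc: "- c0 \<in> Cp" using pos by (auto simp: Cp_def inner_commute)
    have "inner \<mu> (A 0 + h - w0 - \<sigma> *\<^sub>R (- c0)) + \<beta> * (a 0 + e + 0) \<ge> b" if "\<sigma> \<ge> 0" for \<sigma>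
      by (rule Wb[OF w0 Cpcone[OF mc that]]) simp
    hence H: "\<sigma> * inner \<mu> c0 + (inner \<mu> (h - w0) + \<beta> * e) \<ge> b" if "\<sigma> \<ge> 0" for \<sigma>
      using that by (simp add: inner_diff_right inner_add_right algebra_simps)
    have "inner \<mu> c0 < 0" using c0(1) b00 by (simp add: inner_commute)
    have "(\<bar>inner \<mu> (h - w0) + \<beta> * e\<bar> + \<bar>b\<bar> + 1) / (- inner \<mu> c0) \<ge> 0"
      using \<open>inner \<mu> c0 < 0\<close> by (intro divide_nonneg_pos) auto
    from H[OF this] have "(\<bar>inner \<mu> (h - w0) + \<beta> * e\<bar> + \<bar>b\<bar> + 1) / (- inner \<mu> c0) * inner \<mu> c0 + (inner \<mu> (h - w0) + \<beta> * e) \<ge> b" .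
    moreover have "(\<bar>inner \<mu> (h - w0) + \<beta> * e\<bar> + \<bar>b\<bar> + 1) / (- inner \<mu> c0) * inner \<mu> c0 = - (\<bar>inner \<mu> (h - w0) + \<beta> * e\<bar> + \<bar>b\<bar> + 1)"
      using \<open>inner \<mu> c0 < 0\<close> by (simp add: field_simps)
    ultimately show False by linarith
  qed
  have lin0: "inner \<mu> (A z) + \<beta> * a z = 0" for z
  proof -
    define ll where "ll = inner \<mu> (A z) + \<beta> * a z"
    define k0 where "k0 = inner \<mu> (h - w0) + \<beta> * e"
    have "inner \<mu> (A (\<sigma> *\<^sub>R z) + h - w0 - 0) + \<beta> * (a (\<sigma> *\<^sub>R z) + e + 0) \<ge> b" for \<sigma>
      by (rule Wb[OF w0 Cp0]) simp
    moreover have "inner \<mu> (A (\<sigma> *\<^sub>R z) + h - w0 - 0) + \<beta> * (a (\<sigma> *\<^sub>R z) + e + 0) = \<sigma> * ll + k0" for \<sigma>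
      by (simp add: ll_def k0_def blinfun.scaleR_right inner_diff_right inner_add_right algebra_simps)
    ultimately have L: "\<sigma> * ll + k0 \<ge> b" for \<sigma> by metis
    show ?thesis
    proof (rule ccontr)
      assume "\<not> ?thesis"
      hence "ll \<noteq> 0" by (simp add: ll_def)
      have "(- (\<bar>k0\<bar> + \<bar>b\<bar> + 1) / ll) * ll + k0 \<ge> b" by (rule L)
      moreover have "(- (\<bar>k0\<bar> + \<bar>b\<bar> + 1) / ll) * ll = - (\<bar>k0\<bar> + \<bar>b\<bar> + 1)" using \<open>ll \<noteq> 0\<close> by simp
      ultimately show False by linarith
    qed
  qed
  have \<beta>pos: "\<beta> > 0"
  proof (rule ccontr)
    assume "\<not> \<beta> > 0"
    hence "\<beta> = 0" using \<beta> by simp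
    hence "\<forall>v. inner (A v) \<mu> = 0" using lin0 by (simp add: inner_commute)
    hence "\<mu> = 0" using qual muC by blast
    thus False using cb(1) c \<open>\<beta> = 0\<close> by (simp add: zero_prod_def)
  qed
  define l where "l = inverse \<beta> *\<^sub>R \<mu>"
  have lC: "l \<in> C" unfolding l_def using Ccone[OF muC] \<beta>pos by simp
  have l1: "a v + inner (A v) l = 0" for v
  proof -
    have "inner (A v) l = inverse \<beta> * inner \<mu> (A v)" by (simp add: l_def inner_commute)
    also have "\<dots> = inverse \<beta> * (- (\<beta> * a v))"
    proof -
      have "inner \<mu> (A v) = - (\<beta> * a v)" using lin0[of v] by linarith
      thus ?thesis by simp
    qed
    also have "\<dots> = - a v" using \<beta>pos by simp
    finally show ?thesis by simp
  qed
  have l2: "e + inner l (h - w) \<ge> 0" if w: "w \<in> Kd" for w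
  proof -
    have "inner \<mu> (A 0 + h - w - 0) + \<beta> * (a 0 + e + 0) \<ge> b" by (rule Wb[OF w Cp0]) simp
    hence "inner \<mu> (h - w) + \<beta> * e \<ge> 0" using b0 by simp
    hence "inverse \<beta> * (inner \<mu> (h - w) + \<beta> * e) \<ge> 0" using \<beta>pos by simp
    moreover have "inverse \<beta> * (inner \<mu> (h - w) + \<beta> * e) = e + inner l (h - w)"
      using \<beta>pos by (simp add: l_def algebra_simps)
    ultimately show ?thesis by simp
  qed
  show ?thesis using lC l1 l2 by blast
qed

lemma dini:
  fixes K :: "'b::euclidean_space set"
  assumes Kc: "closed K" and p: "p \<in> K" and s: "s > 0" and \<eta>: "\<eta> > 0" and \<gamma>: "\<gamma> > 0"
    and hyp: "\<forall>\<tau>\<in>{0..s}. \<forall>\<pi>\<in>K. p + \<tau> *\<^sub>R v \<notin> K \<and> dist (p + \<tau> *\<^sub>R v) \<pi> = infdist (p + \<tau> *\<^sub>R v) K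
               \<longrightarrow> inner (p + \<tau> *\<^sub>R v - \<pi>) v \<le> \<eta> * dist (p + \<tau> *\<^sub>R v) \<pi>"
  shows "infdist (p + s *\<^sub>R v) K \<le> 2 * \<eta> * s + \<gamma>"
proof (rule ccontr)
  assume neg: "\<not> ?thesis"
  define \<phi> where "\<phi> \<tau> = infdist (p + \<tau> *\<^sub>R v) K" for \<tau>
  define m where "m \<tau> = 2 * \<eta> * \<tau> + \<gamma>" for \<tau>
  have Kne: "K \<noteq> {}" using p by auto
  have cphi: "continuous_on UNIV \<phi>" unfolding \<phi>_def by (intro continuous_intros)
  have cm: "continuous_on UNIV m" unfolding m_def by (intro continuous_intros)
  have lip: "\<bar>\<phi> a - \<phi> b\<bar> \<le> \<bar>a - b\<bar> * norm v" for a b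
  proof -
    have "\<bar>\<phi> a - \<phi> b\<bar> \<le> dist (p + a *\<^sub>R v) (p + b *\<^sub>R v)" unfolding \<phi>_def by (rule infdist_triangle_abs)
    also have "\<dots> = \<bar>a - b\<bar> * norm v" by (simp add: dist_norm scaleR_diff_left[symmetric])
    finally show ?thesis .
  qed
  define B where "B = {0..s} \<inter> {\<tau>. m \<tau> \<le> \<phi> \<tau>}"
  have Bcl: "closed B" unfolding B_def by (intro closed_Int closed_atLeastAtMost closed_Collect_le cphi cm)
  have sB: "s \<in> B" using neg s unfolding B_def m_def \<phi>_def by auto
  have Bne: "B \<noteq> {}" using sB by auto
  have Bbd: "bdd_below B" unfolding B_def by (auto intro: bdd_belowI[of _ 0])
  define T where "T = Inf B"
  have TB: "T \<in> B" unfolding T_def by (rule closed_contains_Inf[OF Bne Bbd Bcl])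
  have Tle: "T \<le> \<tau>" if "\<tau> \<in> B" for \<tau> unfolding T_def using that Bbd by (simp add: cInf_lower)
  have T0: "0 \<le> T" "T \<le> s" and mT: "m T \<le> \<phi> T" using TB unfolding B_def by auto
  have phi0: "\<phi> 0 = 0" unfolding \<phi>_def using p by simp
  have Tpos: "T > 0"
  proof (rule ccontr)
    assume "\<not> T > 0" hence "T = 0" using T0 by simp
    thus False using mT phi0 \<gamma> by (simp add: m_def)
  qed
  have "2 * \<eta> * T \<ge> 0" using T0 \<eta> by simp
  hence phiT: "\<phi> T \<ge> \<gamma>" using mT unfolding m_def by linarith
  define \<delta> where "\<delta> = min (T/2) (min (\<gamma> / (2 * norm v + 2)) (\<eta> * \<gamma> / (2 * ((norm v)^2 + 1))))"
  have \<delta>pos: "\<delta> > 0" unfolding \<delta>_def using Tpos \<gamma> \<eta> by (auto intro!: divide_pos_pos add_nonneg_pos)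
  have \<delta>T: "\<delta> \<le> T/2" unfolding \<delta>_def by (rule min.cobounded1)
  have \<delta>1: "\<delta> * norm v \<le> \<gamma>/2"
  proof -
    have "\<delta> \<le> \<gamma> / (2 * norm v + 2)" unfolding \<delta>_def by (rule order_trans[OF min.cobounded2 min.cobounded1])
    hence "\<delta> * (2 * norm v + 2) \<le> \<gamma>" by (simp add: le_divide_eq add_nonneg_pos)
    thus ?thesis using \<delta>pos by (simp add: algebra_simps)
  qed
  have \<delta>2: "\<delta> * (norm v)^2 \<le> \<eta> * \<gamma> / 2"
  proof -
    have "\<delta> \<le> \<eta> * \<gamma> / (2 * ((norm v)^2 + 1))" unfolding \<delta>_def by (rule order_trans[OF min.cobounded2 min.cobounded2])
    hence "\<delta> * (2 * ((norm v)^2 + 1)) \<le> \<eta> * \<gamma>" by (simp add: le_divide_eq add_nonneg_pos)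
    thus ?thesis using \<delta>pos by (simp add: algebra_simps)
  qed
  define \<tau>' where "\<tau>' = T - \<delta>"
  have \<tau>'r: "0 \<le> \<tau>'" "\<tau>' < T" using \<delta>T \<delta>pos Tpos by (auto simp: \<tau>'_def)
  have \<tau>'notB: "\<tau>' \<notin> B" using Tle \<tau>'r(2) by force
  hence phi': "\<phi> \<tau>' < m \<tau>'" using \<tau>'r T0 unfolding B_def by auto
  have phi'low: "\<phi> \<tau>' \<ge> \<gamma>/2"
  proof -
    have "\<bar>\<phi> T - \<phi> \<tau>'\<bar> \<le> \<delta> * norm v" using lip[of T \<tau>'] \<delta>pos by (simp add: \<tau>'_def)
    thus ?thesis using phiT \<delta>1 by linarith
  qed
  define P' where "P' = p + \<tau>' *\<^sub>R v"
  have P'K: "P' \<notin> K" using phi'low \<gamma> unfolding P'_def \<phi>_def by (metis infdist_zero less_le_not_le half_gt_zero)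
  obtain \<pi> where \<pi>: "\<pi> \<in> K" "infdist P' K = dist P' \<pi>" using infdist_attains_inf[OF Kc Kne] by metis
  define f' where "f' = \<phi> \<tau>'"
  have f'eq: "f' = norm (P' - \<pi>)" using \<pi> by (simp add: f'_def \<phi>_def P'_def dist_norm)
  have f'pos: "f' \<ge> \<gamma>/2" using phi'low by (simp add: f'_def)
  have inn: "inner (P' - \<pi>) v \<le> \<eta> * f'"
  proof -
    have "\<tau>' \<in> {0..s}" using \<tau>'r T0 by auto
    hence "inner (P' - \<pi>) v \<le> \<eta> * dist P' \<pi>" using hyp \<pi> P'K unfolding P'_def by metis
    thus ?thesis using \<pi>(2) unfolding f'_def \<phi>_def P'_def by simp
  qed
  have PT: "p + T *\<^sub>R v - \<pi> = (P' - \<pi>) + \<delta> *\<^sub>R v"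
    by (simp add: P'_def \<tau>'_def algebra_simps)
  define c2 where "c2 = \<delta>^2 * (norm v)^2 / (2 * f')"
  have f'p: "f' > 0" using f'pos \<gamma> by linarith
  have c2n: "c2 \<ge> 0" unfolding c2_def using f'p by simp
  have c2e: "2 * f' * c2 = \<delta>^2 * (norm v)^2" unfolding c2_def using f'p by simp
  have "(norm ((P' - \<pi>) + \<delta> *\<^sub>R v))^2 = f'^2 + 2 * \<delta> * inner (P' - \<pi>) v + \<delta>^2 * (norm v)^2"
  proof -
    have gen: "(norm (a + b))^2 = (norm a)^2 + 2 * inner a b + (norm b)^2" for a b :: 'b
      by (simp add: power2_norm_eq_inner inner_add_left inner_add_right inner_commute)
    have i1: "inner (P' - \<pi>) (\<delta> *\<^sub>R v) = \<delta> * inner (P' - \<pi>) v" by simp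
    have i2: "(norm (\<delta> *\<^sub>R v))^2 = \<delta>^2 * (norm v)^2"
      by (simp only: norm_scaleR power_mult_distrib power2_abs)
    show ?thesis unfolding gen i1 i2 f'eq by (simp only: mult.assoc)
  qed
  also have "\<dots> \<le> f'^2 + 2 * \<delta> * (\<eta> * f') + \<delta>^2 * (norm v)^2"
    using inn \<delta>pos by simp
  also have "\<dots> \<le> (f' + \<eta> * \<delta> + c2)^2"
  proof -
    have "(f' + \<eta> * \<delta> + c2)^2 = f'^2 + 2 * \<delta> * (\<eta> * f') + 2 * f' * c2 + (\<eta> * \<delta> + c2)^2"
      by (simp add: power2_eq_square algebra_simps)
    thus ?thesis using c2e by simp
  qed
  finally have "(norm ((P' - \<pi>) + \<delta> *\<^sub>R v))^2 \<le> (f' + \<eta> * \<delta> + c2)^2" .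
  hence nb: "norm ((P' - \<pi>) + \<delta> *\<^sub>R v) \<le> f' + \<eta> * \<delta> + c2"
  proof (rule power2_le_imp_le)
    show "0 \<le> f' + \<eta> * \<delta> + c2" using f'p c2n mult_nonneg_nonneg[of \<eta> \<delta>] \<eta> \<delta>pos by linarith
  qed
  have c2b: "c2 \<le> \<eta> * \<delta> / 2"
  proof -
    have "c2 = \<delta> * (\<delta> * (norm v)^2) / (2 * f')" unfolding c2_def by (simp add: power2_eq_square)
    also have "\<dots> \<le> \<delta> * (\<eta> * \<gamma> / 2) / (2 * f')"
      using \<delta>2 \<delta>pos f'p by (intro divide_right_mono mult_left_mono) auto
    also have "\<dots> \<le> \<delta> * (\<eta> * \<gamma> / 2) / \<gamma>"
    proof (rule divide_left_mono)
      show "\<gamma> \<le> 2 * f'" using f'pos by linarith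
      show "0 \<le> \<delta> * (\<eta> * \<gamma> / 2)" using \<delta>pos \<eta> \<gamma> by simp
      show "0 < 2 * f' * \<gamma>" using f'p \<gamma> by simp
    qed
    also have "\<dots> = \<eta> * \<delta> / 2" using \<gamma> by simp
    finally show ?thesis .
  qed
  have "\<phi> T \<le> dist (p + T *\<^sub>R v) \<pi>" unfolding \<phi>_def using \<pi>(1) by (rule infdist_le)
  also have "\<dots> = norm ((P' - \<pi>) + \<delta> *\<^sub>R v)" by (simp add: dist_norm PT)
  finally have "\<phi> T \<le> f' + \<eta> * \<delta> + c2" using nb by linarith
  hence "\<phi> T < m \<tau>' + \<eta> * \<delta> + \<eta> * \<delta> / 2" using c2b phi' f'_def by linarith
  moreover have "m \<tau>' = m T - 2 * \<eta> * \<delta>" by (simp add: m_def \<tau>'_def algebra_simps)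
  moreover have "\<eta> * \<delta> > 0" using \<eta> \<delta>pos by simp
  ultimately have "\<phi> T < m T" by linarith
  thus False using mT by simp
qed

lemma unit_subseq:
  fixes n :: "nat \<Rightarrow> 'b::euclidean_space"
  assumes "\<forall>k. norm (n k) = 1"
  obtains l r where "strict_mono r" "(n \<circ> r) \<longlonglongrightarrow> l" "norm l = 1"
proof -
  have "bounded (range n)" using assms by (auto simp: bounded_iff intro!: exI[of _ 1])
  then obtain l r where r: "strict_mono r" "(n \<circ> r) \<longlonglongrightarrow> l"
    using bounded_imp_convergent_subsequence by blast
  have "(\<lambda>k. norm ((n \<circ> r) k)) \<longlonglongrightarrow> norm l" using tendsto_norm[OF r(2)] .
  moreover have "(\<lambda>k. norm ((n \<circ> r) k)) = (\<lambda>k. 1)" using assms by auto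
  ultimately have "norm l = 1" using LIMSEQ_unique tendsto_const by metis
  thus ?thesis using that r by blast
qed

lemma clarke:
  fixes K :: "'b::euclidean_space set"
  assumes Kc: "closed K" and v: "\<forall>n\<in>dir_normal_cone K y u. inner n v \<le> 0"
    and pK: "\<forall>k. p k \<in> K" and t: "t \<longlonglongrightarrow> 0" "\<forall>k. t k > 0"
    and pu: "(\<lambda>k. inverse (t k) *\<^sub>R (p k - y)) \<longlonglongrightarrow> u"
    and s: "\<forall>k. s k > 0" and st: "(\<lambda>k. s k / t k) \<longlonglongrightarrow> 0"
  shows "(\<lambda>k. infdist (p k + s k *\<^sub>R v) K / s k) \<longlonglongrightarrow> 0"
proof -
  define bad where "bad \<eta> k \<tau> \<pi> \<longleftrightarrow> \<tau> \<in> {0..s k} \<and> \<pi> \<in> K \<and> p k + \<tau> *\<^sub>R v \<notin> K \<and>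
      dist (p k + \<tau> *\<^sub>R v) \<pi> = infdist (p k + \<tau> *\<^sub>R v) K \<and>
      \<not> inner (p k + \<tau> *\<^sub>R v - \<pi>) v \<le> \<eta> * dist (p k + \<tau> *\<^sub>R v) \<pi>" for \<eta> k \<tau> \<pi>
  have step1: "\<exists>N. \<forall>k\<ge>N. \<forall>\<tau> \<pi>. \<not> bad \<eta> k \<tau> \<pi>" if \<eta>: "\<eta> > 0" for \<eta>
  proof (rule ccontr)
    assume "\<not> ?thesis"
    hence "\<forall>N. \<exists>k \<tau> \<pi>. k \<ge> N \<and> bad \<eta> k \<tau> \<pi>" by blast
    then obtain kk \<tau>\<tau> \<pi>\<pi> where kk: "\<And>N. kk N \<ge> N" and bd: "\<And>N. bad \<eta> (kk N) (\<tau>\<tau> N) (\<pi>\<pi> N)"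
      by metis
    define P where "P N = p (kk N) + \<tau>\<tau> N *\<^sub>R v" for N
    define \<delta> where "\<delta> N = dist (P N) (\<pi>\<pi> N)" for N
    define n where "n N = inverse (\<delta> N) *\<^sub>R (P N - \<pi>\<pi> N)" for N
    have \<pi>K: "\<pi>\<pi> N \<in> K" for N using bd[of N] by (simp add: bad_def)
    have PK: "P N \<notin> K" for N using bd[of N] by (simp add: bad_def P_def)
    have \<delta>pos: "\<delta> N > 0" for N using PK[of N] \<pi>K[of N] by (auto simp: \<delta>_def)
    have \<delta>inf: "\<delta> N = infdist (P N) K" for N using bd[of N] by (simp add: bad_def P_def \<delta>_def)
    have \<tau>r: "0 \<le> \<tau>\<tau> N" "\<tau>\<tau> N \<le> s (kk N)" for N using bd[of N] by (auto simp: bad_def)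
    have nunit: "norm (n N) = 1" for N using \<delta>pos[of N] by (simp add: n_def \<delta>_def dist_norm)
    have ninner: "inner (n N) v > \<eta>" for N
    proof -
      have "\<not> inner (P N - \<pi>\<pi> N) v \<le> \<eta> * \<delta> N" using bd[of N] unfolding bad_def P_def \<delta>_def by blast
      hence "inner (P N - \<pi>\<pi> N) v > \<eta> * \<delta> N" by simp
      moreover have "inner (n N) v = inner (P N - \<pi>\<pi> N) v / \<delta> N"
        unfolding n_def inner_scaleR_left by (simp add: divide_inverse mult.commute)
      ultimately show ?thesis using \<delta>pos[of N] by (simp add: pos_less_divide_eq mult.commute)
    qed
    have nF: "n N \<in> frechet_normal_cone K (\<pi>\<pi> N)" for N
    proof -
      have "\<forall>y\<in>K. dist (P N) (\<pi>\<pi> N) \<le> dist (P N) y"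
        using \<delta>inf[of N] by (simp add: \<delta>_def infdist_le)
      from prox_frechet[OF \<pi>K this] show ?thesis unfolding n_def
        using \<delta>pos[of N] by (intro frechet_scale) auto
    qed
    have kklim: "filterlim kk sequentially sequentially"
      by (rule filterlim_at_top_mono[OF filterlim_ident]) (use kk in \<open>auto intro: always_eventually\<close>)
    have tk: "(\<lambda>N. t (kk N)) \<longlonglongrightarrow> 0" using filterlim_compose[OF t(1) kklim] .
    have puk: "(\<lambda>N. inverse (t (kk N)) *\<^sub>R (p (kk N) - y)) \<longlonglongrightarrow> u" using filterlim_compose[OF pu kklim] .
    have stk: "(\<lambda>N. s (kk N) / t (kk N)) \<longlonglongrightarrow> 0" using filterlim_compose[OF st kklim] .
    have \<delta>le: "\<delta> N \<le> s (kk N) * norm v" for N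
    proof -
      have "\<delta> N \<le> dist (P N) (p (kk N))" using \<delta>inf[of N] pK by (simp add: infdist_le)
      also have "\<dots> = \<tau>\<tau> N * norm v" using \<tau>r[of N] by (simp add: P_def dist_norm)
      also have "\<dots> \<le> s (kk N) * norm v" using \<tau>r[of N] by (simp add: mult_right_mono)
      finally show ?thesis .
    qed
    have diff: "(\<lambda>N. inverse (t (kk N)) *\<^sub>R (\<pi>\<pi> N - y) - inverse (t (kk N)) *\<^sub>R (p (kk N) - y)) \<longlonglongrightarrow> 0"
    proof (rule Lim_null_comparison)
      show "eventually (\<lambda>N. norm (inverse (t (kk N)) *\<^sub>R (\<pi>\<pi> N - y) - inverse (t (kk N)) *\<^sub>R (p (kk N) - y))
          \<le> 2 * norm v * (s (kk N) / t (kk N))) sequentially"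
      proof (intro always_eventually allI)
        fix N
        have tp: "t (kk N) > 0" using t(2) by auto
        have "\<pi>\<pi> N - p (kk N) = \<tau>\<tau> N *\<^sub>R v - (P N - \<pi>\<pi> N)" by (simp add: P_def)
        hence "norm (\<pi>\<pi> N - p (kk N)) \<le> \<tau>\<tau> N * norm v + \<delta> N"
          using \<tau>r[of N] by (metis (no_types, opaque_lifting) abs_of_nonneg dist_norm norm_scaleR norm_triangle_ineq4 \<delta>_def)
        also have "\<dots> \<le> 2 * norm v * s (kk N)" using \<delta>le[of N] \<tau>r[of N] mult_right_mono[OF \<tau>r(2)[of N], of "norm v"] by (simp add: algebra_simps)
        finally have A: "norm (\<pi>\<pi> N - p (kk N)) \<le> 2 * norm v * s (kk N)" .
        have "inverse (t (kk N)) *\<^sub>R (\<pi>\<pi> N - y) - inverse (t (kk N)) *\<^sub>R (p (kk N) - y)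
            = inverse (t (kk N)) *\<^sub>R (\<pi>\<pi> N - p (kk N))" by (simp add: scaleR_diff_right)
        hence "norm (inverse (t (kk N)) *\<^sub>R (\<pi>\<pi> N - y) - inverse (t (kk N)) *\<^sub>R (p (kk N) - y))
            = norm (\<pi>\<pi> N - p (kk N)) / t (kk N)" using tp by (simp add: divide_inverse mult.commute)
        also have "\<dots> \<le> 2 * norm v * s (kk N) / t (kk N)" using A tp by (simp add: divide_right_mono)
        finally show "norm (inverse (t (kk N)) *\<^sub>R (\<pi>\<pi> N - y) - inverse (t (kk N)) *\<^sub>R (p (kk N) - y))
          \<le> 2 * norm v * (s (kk N) / t (kk N))" by simp
      qed
      show "(\<lambda>N. 2 * norm v * (s (kk N) / t (kk N))) \<longlonglongrightarrow> 0"
        using tendsto_mult[OF tendsto_const stk, of "2 * norm v"] by simp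
    qed
    have \<pi>u: "(\<lambda>N. inverse (t (kk N)) *\<^sub>R (\<pi>\<pi> N - y)) \<longlonglongrightarrow> u" by (rule Lim_transform[OF puk diff])
    obtain l r where r: "strict_mono r" "(n \<circ> r) \<longlonglongrightarrow> l" "norm l = 1"
      using unit_subseq[of n] nunit by blast
    have "l \<in> dir_normal_cone K y u"
    proof (rule limit_normal[where t="\<lambda>N. t (kk (r N))" and p="\<lambda>N. \<pi>\<pi> (r N)" and n="n \<circ> r"])
      show "(\<lambda>N. t (kk (r N))) \<longlonglongrightarrow> 0" using LIMSEQ_subseq_LIMSEQ[OF tk r(1)] by (simp add: o_def)
      show "\<forall>N. 0 < t (kk (r N))" using t(2) by auto
      show "(\<lambda>N. inverse (t (kk (r N))) *\<^sub>R (\<pi>\<pi> (r N) - y)) \<longlonglongrightarrow> u"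
        using LIMSEQ_subseq_LIMSEQ[OF \<pi>u r(1)] by (simp add: o_def)
      show "\<forall>N. (n \<circ> r) N \<in> frechet_normal_cone K (\<pi>\<pi> (r N))" using nF by simp
      show "(n \<circ> r) \<longlonglongrightarrow> l" by (rule r(2))
    qed
    hence "inner l v \<le> 0" using v by blast
    moreover have "inner l v \<ge> \<eta>"
    proof (rule tendsto_lowerbound[OF tendsto_inner[OF r(2) tendsto_const]])
      show "eventually (\<lambda>N. \<eta> \<le> inner ((n \<circ> r) N) v) sequentially"
        using ninner by (auto intro: always_eventually less_imp_le)
    qed simp
    ultimately show False using \<eta> by simp
  qed
  show ?thesis
  proof (rule LIMSEQ_I)
    fix \<epsilon> :: real assume \<epsilon>: "\<epsilon> > 0"
    define \<eta> where "\<eta> = \<epsilon> / 4"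
    have \<eta>: "\<eta> > 0" using \<epsilon> by (simp add: \<eta>_def)
    obtain N where N: "\<And>k \<tau> \<pi>. k \<ge> N \<Longrightarrow> \<not> bad \<eta> k \<tau> \<pi>" using step1[OF \<eta>] by blast
    have "norm (infdist (p k + s k *\<^sub>R v) K / s k - 0) < \<epsilon>" if k: "k \<ge> N" for k
    proof -
      have sk: "s k > 0" using s by auto
      have hyp: "\<forall>\<tau>\<in>{0..s k}. \<forall>\<pi>\<in>K. p k + \<tau> *\<^sub>R v \<notin> K \<and> dist (p k + \<tau> *\<^sub>R v) \<pi> = infdist (p k + \<tau> *\<^sub>R v) K
               \<longrightarrow> inner (p k + \<tau> *\<^sub>R v - \<pi>) v \<le> \<eta> * dist (p k + \<tau> *\<^sub>R v) \<pi>"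
        using N[OF k] unfolding bad_def by blast
      have "infdist (p k + s k *\<^sub>R v) K \<le> 2 * \<eta> * s k + \<eta> * s k"
        by (rule dini[OF Kc _ sk \<eta> _ hyp]) (use pK \<eta> sk in auto)
      hence "infdist (p k + s k *\<^sub>R v) K / s k \<le> 3 * \<eta>" using sk by (simp add: divide_le_eq algebra_simps)
      moreover have "infdist (p k + s k *\<^sub>R v) K / s k \<ge> 0" using sk by (simp add: infdist_nonneg)
      moreover have "3 * \<eta> < \<epsilon>" using \<epsilon> by (simp add: \<eta>_def)
      ultimately have "\<bar>infdist (p k + s k *\<^sub>R v) K / s k\<bar> < \<epsilon>" by linarith
      thus ?thesis by (simp only: real_norm_def diff_zero)
    qed
    thus "\<exists>no. \<forall>k\<ge>no. norm (infdist (p k + s k *\<^sub>R v) K / s k - 0) < \<epsilon>" by blast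
  qed
qed

lemma sq_norm_deriv:
  fixes g :: "'a::euclidean_space \<Rightarrow> 'b::euclidean_space" and Dg :: "'a \<Rightarrow> ('a \<Rightarrow>\<^sub>L 'b)"
  assumes g_deriv: "\<And>y. (g has_derivative blinfun_apply (Dg y)) (at y)"
  shows "((\<lambda>\<sigma>. (norm (g (z + \<sigma> *\<^sub>R h) - q))^2) has_real_derivative (2 * inner (g z - q) (Dg z h))) (at 0)"
proof -
  have 1: "((\<lambda>\<sigma>. z + \<sigma> *\<^sub>R h) has_derivative (\<lambda>s. s *\<^sub>R h)) (at 0)"
    by (auto intro!: derivative_eq_intros)
  have 2: "((\<lambda>\<sigma>. g (z + \<sigma> *\<^sub>R h)) has_derivative (\<lambda>s. Dg z (s *\<^sub>R h))) (at 0)"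
    using has_derivative_compose[OF 1, of g "Dg z"] g_deriv[of z] by (simp add: o_def)
  have 3: "((\<lambda>\<sigma>. inner (g (z + \<sigma> *\<^sub>R h) - q) (g (z + \<sigma> *\<^sub>R h) - q)) has_derivative
     (\<lambda>s. inner (g z - q) (Dg z (s *\<^sub>R h)) + inner (Dg z (s *\<^sub>R h)) (g z - q))) (at 0)"
    by (rule has_derivative_eq_rhs, (rule derivative_intros 2)+) (auto simp: fun_eq_iff)
  show ?thesis unfolding has_field_derivative_def power2_norm_eq_inner
    by (rule has_derivative_eq_rhs[OF 3]) (auto simp: fun_eq_iff blinfun.scaleR_right inner_commute)
qed

lemma ms_step:
  fixes g :: "'a::euclidean_space \<Rightarrow> 'b::euclidean_space" and Dg :: "'a \<Rightarrow> ('a \<Rightarrow>\<^sub>L 'b)"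
  assumes g_deriv: "\<And>y. (g has_derivative blinfun_apply (Dg y)) (at y)"
    and Kc: "closed K" and Kne: "K \<noteq> {}"
    and D: "0 < r" "r \<le> infdist y0 (feasible_set g K)"
    and a: "infdist (g y0) K > 0"
  shows "\<exists>yh q n. norm (yh - y0) < r \<and> q \<in> K \<and> n \<in> frechet_normal_cone K q \<and> norm n = 1 \<and>
           norm (g yh - q) \<le> infdist (g y0) K \<and>
           (\<forall>h. \<bar>inner n (Dg yh h)\<bar> \<le> (2 * infdist (g y0) K / r) * norm h)"
proof -
  define a where "a = infdist (g y0) K"
  define \<beta> where "\<beta> = 2 * a / r"
  have apos: "a > 0" using assms by (simp add: a_def)
  have \<beta>pos: "\<beta> > 0" using apos D by (simp add: \<beta>_def)
  define H where "H y = infdist (g y) K + \<beta> * norm (y - y0)" for y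
  have gc: "continuous_on UNIV g"
    using g_deriv by (meson continuous_on_eq_continuous_within has_derivative_continuous)
  have Hc: "continuous_on (cball y0 r) H" unfolding H_def
    by (intro continuous_intros continuous_on_compose2[OF continuous_on_infdist[OF continuous_on_id] continuous_on_subset[OF gc]]) auto
  have cne: "cball y0 r \<noteq> {}" using D(1) by simp
  obtain yh where yh: "yh \<in> cball y0 r" "\<And>w. w \<in> cball y0 r \<Longrightarrow> H yh \<le> H w"
    using continuous_attains_inf[OF compact_cball cne Hc] by blast
  have Hy0: "H y0 = a" by (simp add: H_def a_def)
  have Hyh: "H yh \<le> a" using yh(2)[of y0] D(1) Hy0 by simp
  have inf_nn: "infdist (g yh) K \<ge> 0" by (rule infdist_nonneg)
  have yhr: "norm (yh - y0) < r"
  proof (rule ccontr)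
    assume "\<not> ?thesis"
    hence "norm (yh - y0) = r" using yh(1) by (simp add: dist_norm norm_minus_commute)
    hence "H yh \<ge> \<beta> * r" using inf_nn by (simp add: H_def)
    also have "\<beta> * r = 2 * a" using D(1) by (simp add: \<beta>_def)
    finally show False using Hyh apos by simp
  qed
  have yhK: "g yh \<notin> K"
  proof
    assume "g yh \<in> K"
    hence "yh \<in> feasible_set g K" by (simp add: feasible_set_def)
    hence "infdist y0 (feasible_set g K) \<le> dist y0 yh" by (rule infdist_le)
    thus False using D yhr by (simp add: dist_norm norm_minus_commute)
  qed
  define e where "e = infdist (g yh) K"
  have epos: "e > 0" unfolding e_def using infdist_pos_not_in_closed[OF Kc Kne yhK] .
  obtain q where q: "q \<in> K" "infdist (g yh) K = dist (g yh) q" using infdist_attains_inf[OF Kc Kne] by metis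
  have eq: "e = norm (g yh - q)" using q by (simp add: e_def dist_norm)
  have "\<beta> * norm (yh - y0) \<ge> 0" using \<beta>pos by simp
  hence ea: "e \<le> a" using Hyh unfolding H_def e_def by linarith
  define n where "n = inverse e *\<^sub>R (g yh - q)"
  have nunit: "norm n = 1" using epos eq by (simp add: n_def)
  have nF: "n \<in> frechet_normal_cone K q"
  proof -
    have "\<forall>y\<in>K. dist (g yh) q \<le> dist (g yh) y" using q by (metis infdist_le)
    from prox_frechet[OF q(1) this] show ?thesis unfolding n_def using epos by (intro frechet_scale) auto
  qed
  have stat: "inner n (Dg yh h) \<ge> - \<beta> * norm h" for h
  proof -
    define \<psi> where "\<psi> \<sigma> = (norm (g (yh + \<sigma> *\<^sub>R h) - q))^2" for \<sigma>
    have der: "(\<psi> has_real_derivative (2 * inner (g yh - q) (Dg yh h))) (at 0)"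
      unfolding \<psi>_def by (rule sq_norm_deriv[OF g_deriv])
    hence lim: "((\<lambda>\<sigma>. (\<psi> \<sigma> - \<psi> 0) / \<sigma>) \<longlongrightarrow> 2 * inner (g yh - q) (Dg yh h)) (at_right 0)"
      using has_field_derivative_iff[of \<psi> _ 0 UNIV] by (simp add: filterlim_at_split)
    define \<sigma>0 where "\<sigma>0 = min ((r - norm (yh - y0)) / (norm h + 1)) (e / (\<beta> * (norm h + 1)))"
    have \<sigma>0: "\<sigma>0 > 0" unfolding \<sigma>0_def using yhr epos \<beta>pos by (auto intro!: divide_pos_pos add_nonneg_pos mult_pos_pos)
    have bnd: "(\<psi> \<sigma> - \<psi> 0) / \<sigma> \<ge> - 2 * e * \<beta> * norm h" if \<sigma>: "\<sigma> \<in> {0<..<\<sigma>0}" for \<sigma>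
    proof -
      have sp: "\<sigma> > 0" using \<sigma> by simp
      have s1: "\<sigma> * norm h < r - norm (yh - y0)"
      proof -
        have "\<sigma> < (r - norm (yh - y0)) / (norm h + 1)" using \<sigma> unfolding \<sigma>0_def by simp
        hence "\<sigma> * (norm h + 1) < r - norm (yh - y0)" by (simp add: pos_less_divide_eq add_nonneg_pos)
        moreover have "\<sigma> * norm h \<le> \<sigma> * (norm h + 1)" using sp by (simp add: algebra_simps)
        ultimately show ?thesis by linarith
      qed
      have s2: "\<beta> * (\<sigma> * norm h) \<le> e"
      proof -
        have "\<sigma> < e / (\<beta> * (norm h + 1))" using \<sigma> unfolding \<sigma>0_def by simp
        hence "\<sigma> * (\<beta> * (norm h + 1)) < e" using \<beta>pos by (simp add: pos_less_divide_eq add_nonneg_pos)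
        moreover have "\<beta> * (\<sigma> * norm h) \<le> \<sigma> * (\<beta> * (norm h + 1))" using sp \<beta>pos by (simp add: algebra_simps)
        ultimately show ?thesis by simp
      qed
      have tri: "norm (yh + s *\<^sub>R h - y0) \<le> norm (yh - y0) + s * norm h" if "s > 0" for s
      proof -
        have "yh + s *\<^sub>R h - y0 = (yh - y0) + s *\<^sub>R h" by simp
        hence "norm (yh + s *\<^sub>R h - y0) \<le> norm (yh - y0) + norm (s *\<^sub>R h)" by (metis norm_triangle_ineq)
        thus ?thesis using that by simp
      qed
      have inb: "yh + \<sigma> *\<^sub>R h \<in> cball y0 r"
      proof -
        have "norm (yh + \<sigma> *\<^sub>R h - y0) \<le> norm (yh - y0) + \<sigma> * norm h"
          using tri[OF sp] .
        thus ?thesis using s1 by (simp add: dist_norm norm_minus_commute)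
      qed
      have "H yh \<le> H (yh + \<sigma> *\<^sub>R h)" by (rule yh(2)[OF inb])
      moreover have "norm (yh + \<sigma> *\<^sub>R h - y0) \<le> norm (yh - y0) + \<sigma> * norm h"
        using tri[OF sp] .
      ultimately have "e \<le> infdist (g (yh + \<sigma> *\<^sub>R h)) K + \<beta> * (\<sigma> * norm h)"
      proof -
        assume A: "H yh \<le> H (yh + \<sigma> *\<^sub>R h)" and B: "norm (yh + \<sigma> *\<^sub>R h - y0) \<le> norm (yh - y0) + \<sigma> * norm h"
        have "\<beta> * norm (yh + \<sigma> *\<^sub>R h - y0) \<le> \<beta> * (norm (yh - y0) + \<sigma> * norm h)"
          using B \<beta>pos by (intro mult_left_mono) auto
        thus ?thesis using A unfolding H_def e_def by (simp add: algebra_simps)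
      qed
      moreover have "infdist (g (yh + \<sigma> *\<^sub>R h)) K \<le> norm (g (yh + \<sigma> *\<^sub>R h) - q)"
        using q(1) by (metis dist_norm infdist_le)
      ultimately have lb: "e - \<beta> * (\<sigma> * norm h) \<le> norm (g (yh + \<sigma> *\<^sub>R h) - q)" by simp
      have "(e - \<beta> * (\<sigma> * norm h))^2 \<le> \<psi> \<sigma>" unfolding \<psi>_def
        using lb s2 by (intro power_mono) auto
      moreover have "(e - \<beta> * (\<sigma> * norm h))^2 \<ge> e^2 - 2 * e * (\<beta> * (\<sigma> * norm h))"
        unfolding power2_diff using zero_le_power2[of "\<beta> * (\<sigma> * norm h)"] by linarith
      moreover have "\<psi> 0 = e^2" by (simp add: \<psi>_def eq)
      ultimately have "\<psi> \<sigma> - \<psi> 0 \<ge> - 2 * e * \<beta> * norm h * \<sigma>" by (simp add: algebra_simps)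
      thus ?thesis using sp by (simp add: le_divide_eq)
    qed
    have "2 * inner (g yh - q) (Dg yh h) \<ge> - 2 * e * \<beta> * norm h"
    proof (rule tendsto_lowerbound[OF lim])
      show "eventually (\<lambda>\<sigma>. - 2 * e * \<beta> * norm h \<le> (\<psi> \<sigma> - \<psi> 0) / \<sigma>) (at_right 0)"
        using eventually_mono[OF eventually_at_right_real[OF \<sigma>0] bnd] by simp
    qed simp
    moreover have "inner (g yh - q) (Dg yh h) = e * inner n (Dg yh h)"
      using epos by (simp add: n_def)
    ultimately have "e * inner n (Dg yh h) \<ge> e * (- \<beta> * norm h)" by (simp add: algebra_simps)
    hence "e * (inner n (Dg yh h) - (- \<beta> * norm h)) \<ge> 0" by (simp add: algebra_simps)
    hence "inner n (Dg yh h) - (- \<beta> * norm h) \<ge> 0" using epos by (simp add: zero_le_mult_iff)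
    thus ?thesis by simp
  qed
  have absb: "\<bar>inner n (Dg yh h)\<bar> \<le> \<beta> * norm h" for h
    using stat[of h] stat[of "- h"] by (simp add: blinfun.minus_right abs_le_iff)
  show ?thesis
  proof (intro exI conjI allI)
    show "norm (yh - y0) < r" "q \<in> K" "n \<in> frechet_normal_cone K q" "norm n = 1" by fact+
    show "norm (g yh - q) \<le> infdist (g y0) K" using ea eq by (simp add: a_def)
    fix h show "\<bar>inner n (Dg yh h)\<bar> \<le> (2 * infdist (g y0) K / r) * norm h" using absb[of h] by (simp add: \<beta>_def a_def)
  qed
qed

lemma dir_sub_conv: "dir_normal_cone K y u \<subseteq> conv_dir_normal_cone K y u"
  unfolding conv_dir_normal_cone_def by (meson closure_subset hull_subset subset_trans)

lemma inv_suc_lim: "(\<lambda>k. c * inverse (real (Suc k))) \<longlonglongrightarrow> 0"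
  using tendsto_mult[OF tendsto_const LIMSEQ_inverse_real_of_nat, of c] by simp

lemma metric_subreg:
  fixes g :: "'a::euclidean_space \<Rightarrow> 'b::euclidean_space" and Dg :: "'a \<Rightarrow> ('a \<Rightarrow>\<^sub>L 'b)"
  assumes g_deriv: "\<And>y. (g has_derivative blinfun_apply (Dg y)) (at y)"
    and Dgc: "isCont Dg x"
    and Kc: "closed K" and xK: "g x \<in> K"
    and rcq: "DirRCQ Dg g K x d"
  shows "\<exists>\<rho>>0. \<exists>L>0. \<forall>t d'. 0 < t \<and> t < \<rho> \<and> norm (d' - d) < \<rho> \<longrightarrow>
          infdist (x + t *\<^sub>R d') (feasible_set g K) \<le> L * infdist (g (x + t *\<^sub>R d')) K"
proof (rule ccontr)
  assume neg: "\<not> ?thesis"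
  define \<Phi> where "\<Phi> = feasible_set g K"
  have xP: "x \<in> \<Phi>" using xK by (simp add: \<Phi>_def feasible_set_def)
  have Kne: "K \<noteq> {}" using xK by auto
  have "\<exists>z. 0 < fst z \<and> fst z < inverse (real (Suc k)) \<and> norm (snd z - d) < inverse (real (Suc k)) \<and>
      infdist (x + fst z *\<^sub>R snd z) \<Phi> > (real (Suc k))^2 * infdist (g (x + fst z *\<^sub>R snd z)) K" for k
  proof -
    have "inverse (real (Suc k)) > 0" "(real (Suc k))^2 > 0" by auto
    hence "\<exists>t d'. 0 < t \<and> t < inverse (real (Suc k)) \<and> norm (d' - d) < inverse (real (Suc k)) \<and>
      infdist (x + t *\<^sub>R d') \<Phi> > (real (Suc k))^2 * infdist (g (x + t *\<^sub>R d')) K"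
      using neg unfolding \<Phi>_def by (meson not_le)
    thus ?thesis by auto
  qed
  then obtain Z where Z: "\<forall>k. 0 < fst (Z k) \<and> fst (Z k) < inverse (real (Suc k)) \<and> norm (snd (Z k) - d) < inverse (real (Suc k)) \<and>
      infdist (x + fst (Z k) *\<^sub>R snd (Z k)) \<Phi> > (real (Suc k))^2 * infdist (g (x + fst (Z k) *\<^sub>R snd (Z k))) K"
    using choice[of "\<lambda>k z. 0 < fst z \<and> fst z < inverse (real (Suc k)) \<and> norm (snd z - d) < inverse (real (Suc k)) \<and>
      infdist (x + fst z *\<^sub>R snd z) \<Phi> > (real (Suc k))^2 * infdist (g (x + fst z *\<^sub>R snd z)) K"] by blast
  define tt where "tt k = fst (Z k)" for k
  define dd where "dd k = snd (Z k)" for k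
  have tt: "\<And>k. 0 < tt k" "\<And>k. tt k < inverse (real (Suc k))"
    and dd: "\<And>k. norm (dd k - d) < inverse (real (Suc k))"
    and big: "\<And>k. infdist (x + tt k *\<^sub>R dd k) \<Phi> > (real (Suc k))^2 * infdist (g (x + tt k *\<^sub>R dd k)) K"
    using Z by (auto simp: tt_def dd_def)
  define y where "y k = x + tt k *\<^sub>R dd k" for k
  define D where "D k = infdist (y k) \<Phi>" for k
  define a where "a k = infdist (g (y k)) K" for k
  define r where "r k = min (D k) (tt k * inverse (real (Suc k)))" for k
  have ddb: "norm (dd k) \<le> norm d + 1" for k
  proof -
    have "inverse (real (Suc k)) \<le> 1" by (simp add: inverse_le_1_iff)
    moreover have "norm (dd k) \<le> norm d + norm (dd k - d)" by (metis add.commute diff_add_cancel norm_triangle_ineq)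
    ultimately show ?thesis using dd[of k] by linarith
  qed
  have Dle: "D k \<le> tt k * norm (dd k)" for k
  proof -
    have "D k \<le> dist (y k) x" unfolding D_def by (rule infdist_le[OF xP])
    thus ?thesis using tt(1)[of k] by (simp add: y_def dist_norm)
  qed
  have a0: "a k \<ge> 0" for k by (simp add: a_def infdist_nonneg)
  have aD: "(real (Suc k))^2 * a k < D k" for k using big[of k] by (simp add: a_def D_def y_def)
  have apos: "a k > 0" for k
  proof (rule ccontr)
    assume "\<not> a k > 0"
    hence "a k = 0" using a0[of k] by simp
    hence "g (y k) \<in> K" using in_closed_iff_infdist_zero[OF Kc Kne] by (simp add: a_def)
    hence "y k \<in> \<Phi>" by (simp add: \<Phi>_def feasible_set_def)
    hence "D k = 0" by (simp add: D_def)
    moreover have "(real (Suc k))^2 * a k \<ge> 0" using a0[of k] by simp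
    ultimately show False using aD[of k] by linarith
  qed
  have Dpos: "D k > 0" for k
  proof -
    have "(real (Suc k))^2 * a k > 0" using apos[of k] by simp
    thus ?thesis using aD[of k] by linarith
  qed
  have rpos: "r k > 0" for k using Dpos[of k] tt(1)[of k] by (simp add: r_def)
  have rD: "r k \<le> D k" for k by (simp add: r_def)
  have rt: "r k \<le> tt k * inverse (real (Suc k))" for k by (simp add: r_def)
  define P where "P k z \<longleftrightarrow> norm (fst z - y k) < r k \<and> fst (snd z) \<in> K \<and> snd (snd z) \<in> frechet_normal_cone K (fst (snd z)) \<and> norm (snd (snd z)) = 1 \<and>
           norm (g (fst z) - fst (snd z)) \<le> a k \<and> (\<forall>h. \<bar>inner (snd (snd z)) (Dg (fst z) h)\<bar> \<le> (2 * a k / r k) * norm h)" for k z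
  have "\<exists>z. P k z" for k
  proof -
    have "\<exists>yh q n. norm (yh - y k) < r k \<and> q \<in> K \<and> n \<in> frechet_normal_cone K q \<and> norm n = 1 \<and>
           norm (g yh - q) \<le> a k \<and> (\<forall>h. \<bar>inner n (Dg yh h)\<bar> \<le> (2 * a k / r k) * norm h)"
      using ms_step[OF g_deriv Kc Kne rpos[of k], of "y k"] rD[of k] apos[of k]
      unfolding D_def a_def \<Phi>_def by blast
    thus ?thesis unfolding P_def by auto
  qed
  then obtain W where W: "\<forall>k. P k (W k)" using choice by blast
  define yh where "yh k = fst (W k)" for k
  define q where "q k = fst (snd (W k))" for k
  define n where "n k = snd (snd (W k))" for k
  have yh: "\<And>k. norm (yh k - y k) < r k" and qK: "\<And>k. q k \<in> K"
    and nF: "\<And>k. n k \<in> frechet_normal_cone K (q k)" and nu: "\<And>k. norm (n k) = 1"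
    and gq: "\<And>k. norm (g (yh k) - q k) \<le> a k"
    and st: "\<And>k h. \<bar>inner (n k) (Dg (yh k) h)\<bar> \<le> (2 * a k / r k) * norm h"
    using W unfolding P_def yh_def q_def n_def by auto
  have t0: "tt \<longlonglongrightarrow> 0"
    by (rule Lim_null_comparison[OF _ LIMSEQ_inverse_real_of_nat])
       (use tt in \<open>auto intro!: always_eventually less_imp_le simp: abs_of_pos\<close>)
  have d0: "(\<lambda>k. dd k - d) \<longlonglongrightarrow> 0"
    by (rule Lim_null_comparison[OF _ LIMSEQ_inverse_real_of_nat])
       (use dd in \<open>auto intro!: always_eventually less_imp_le\<close>)
  define \<zeta> where "\<zeta> k = inverse (tt k) *\<^sub>R (yh k - x)" for k
  have \<zeta>d: "(\<lambda>k. \<zeta> k - dd k) \<longlonglongrightarrow> 0"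
  proof (rule Lim_null_comparison[OF _ LIMSEQ_inverse_real_of_nat])
    show "eventually (\<lambda>k. norm (\<zeta> k - dd k) \<le> inverse (real (Suc k))) sequentially"
    proof (intro always_eventually allI)
      fix k
      have tk: "tt k > 0" using tt(1) by auto
      have "\<zeta> k - dd k = inverse (tt k) *\<^sub>R (yh k - y k)"
      proof -
        have "inverse (tt k) *\<^sub>R (yh k - y k) = inverse (tt k) *\<^sub>R (yh k - x) - (inverse (tt k) * tt k) *\<^sub>R dd k"
        proof -
          have e1: "yh k - y k = (yh k - x) - tt k *\<^sub>R dd k" by (simp add: y_def)
          show ?thesis unfolding e1 scaleR_diff_right scaleR_scaleR by simp
        qed
        thus ?thesis using tk by (simp add: \<zeta>_def)
      qed
      hence "norm (\<zeta> k - dd k) = norm (yh k - y k) / tt k" using tk by (simp add: divide_inverse mult.commute)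
      also have "\<dots> \<le> r k / tt k" using yh[of k] tk by (simp add: divide_right_mono)
      also have "\<dots> \<le> inverse (real (Suc k))" using rt[of k] tk by (simp add: divide_le_eq mult.commute)
      finally show "norm (\<zeta> k - dd k) \<le> inverse (real (Suc k))" .
    qed
  qed
  have \<zeta>lim: "\<zeta> \<longlonglongrightarrow> d"
  proof -
    have "(\<lambda>k. (\<zeta> k - dd k) + (dd k - d)) \<longlonglongrightarrow> 0" using tendsto_add[OF \<zeta>d d0] by simp
    hence "(\<lambda>k. \<zeta> k - d) \<longlonglongrightarrow> 0" by simp
    thus ?thesis by (rule LIM_zero_cancel)
  qed
  have yhx: "yh k = x + tt k *\<^sub>R \<zeta> k" for k
  proof -
    have "tt k \<noteq> 0" using tt(1)[of k] by simp
    thus ?thesis by (simp add: \<zeta>_def)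
  qed
  have yhlim: "yh \<longlonglongrightarrow> x"
  proof -
    have "(\<lambda>k. x + tt k *\<^sub>R \<zeta> k) \<longlonglongrightarrow> x + 0 *\<^sub>R d" by (intro tendsto_intros t0 \<zeta>lim)
    moreover have "yh = (\<lambda>k. x + tt k *\<^sub>R \<zeta> k)" using yhx by auto
    ultimately show ?thesis by simp
  qed
  have Glim: "(\<lambda>k. inverse (tt k) *\<^sub>R (g (yh k) - g x)) \<longlonglongrightarrow> Dg x d"
    using deriv_seq[OF g_deriv t0 _ \<zeta>lim] tt(1) by (simp add: yhx)
  have gqlim: "(\<lambda>k. inverse (tt k) *\<^sub>R (g (yh k) - q k)) \<longlonglongrightarrow> 0"
  proof (rule Lim_null_comparison[OF _ inv_suc_lim[of "norm d + 1"]])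
    show "eventually (\<lambda>k. norm (inverse (tt k) *\<^sub>R (g (yh k) - q k)) \<le> (norm d + 1) * inverse (real (Suc k))) sequentially"
    proof (intro always_eventually allI)
      fix k
      have tk: "tt k > 0" using tt(1) by auto
      define m where "m = real (Suc k)"
      have m1: "m \<ge> 1" by (simp add: m_def)
      have "norm (inverse (tt k) *\<^sub>R (g (yh k) - q k)) = norm (g (yh k) - q k) / tt k"
        using tk by (simp add: divide_inverse mult.commute)
      also have "\<dots> \<le> a k / tt k" using gq[of k] tk by (simp add: divide_right_mono)
      also have "\<dots> \<le> (norm d + 1) * inverse m"
      proof -
        have "m^2 * a k < tt k * norm (dd k)" using aD[of k] Dle[of k] by (simp add: m_def)
        also have "\<dots> \<le> tt k * (norm d + 1)" using ddb[of k] tk by (simp add: mult_left_mono)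
        finally have "m^2 * a k \<le> tt k * (norm d + 1)" by simp
        moreover have "m * a k \<le> m^2 * a k" using m1 a0[of k] by (simp add: power2_eq_square mult_right_mono)
        ultimately have "m * a k \<le> tt k * (norm d + 1)" by linarith
        hence "a k \<le> tt k * (norm d + 1) / m" using m1 by (intro mult_imp_le_div_pos) (auto simp: mult.commute)
        moreover have "tt k * (norm d + 1) / m = (norm d + 1) * inverse m * tt k" by (simp add: divide_inverse)
        ultimately show ?thesis using tk by (intro mult_imp_div_pos_le) auto
      qed
      finally show "norm (inverse (tt k) *\<^sub>R (g (yh k) - q k)) \<le> (norm d + 1) * inverse (real (Suc k))"
        by (simp add: m_def)
    qed
  qed
  have qlim: "(\<lambda>k. inverse (tt k) *\<^sub>R (q k - g x)) \<longlonglongrightarrow> Dg x d"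
  proof -
    have "(\<lambda>k. inverse (tt k) *\<^sub>R (g (yh k) - g x) - inverse (tt k) *\<^sub>R (g (yh k) - q k)) \<longlonglongrightarrow> Dg x d - 0"
      by (intro tendsto_diff Glim gqlim)
    thus ?thesis by (simp add: scaleR_diff_right[symmetric])
  qed
  have blim: "(\<lambda>k. 2 * a k / r k) \<longlonglongrightarrow> 0"
  proof (rule Lim_null_comparison[OF _ inv_suc_lim[of "2 * norm d + 4"]])
    show "eventually (\<lambda>k. norm (2 * a k / r k) \<le> (2 * norm d + 4) * inverse (real (Suc k))) sequentially"
    proof (intro always_eventually allI)
      fix k
      have tk: "tt k > 0" using tt(1) by auto
      define m where "m = real (Suc k)"
      have m1: "m \<ge> 1" by (simp add: m_def)
      have am: "m^2 * a k < D k" using aD[of k] by (simp add: m_def)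
      have "2 * a k \<le> (2 * norm d + 4) * inverse m * r k"
      proof (cases "D k \<le> tt k * inverse m")
        case True
        hence rr: "r k = D k" by (simp add: r_def m_def)
        have "m * (2 * a k) \<le> m^2 * (2 * a k)" using m1 a0[of k] by (simp add: power2_eq_square mult_right_mono)
        also have "\<dots> \<le> 2 * D k" using am by simp
        also have "\<dots> \<le> (2 * norm d + 4) * D k" using Dpos[of k] by (simp add: mult_right_mono)
        finally have "m * (2 * a k) \<le> (2 * norm d + 4) * D k" .
        hence "2 * a k \<le> (2 * norm d + 4) * D k / m" using m1 by (intro mult_imp_le_div_pos) (auto simp: mult.commute)
        thus ?thesis using rr by (simp add: divide_inverse ac_simps)
      next
        case False
        hence rr: "r k = tt k * inverse m" by (simp add: r_def m_def)
        have "m^2 * (2 * a k) \<le> 2 * (tt k * norm (dd k))" using am Dle[of k] by simp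
        also have "\<dots> \<le> 2 * (tt k * (norm d + 1))" using ddb[of k] tk by (simp add: mult_left_mono)
        also have "\<dots> \<le> (2 * norm d + 4) * tt k" using tk by (simp add: algebra_simps)
        finally have "m^2 * (2 * a k) \<le> (2 * norm d + 4) * tt k" .
        hence "2 * a k \<le> (2 * norm d + 4) * tt k / m^2" using m1 by (intro mult_imp_le_div_pos) (auto simp: mult.commute)
        thus ?thesis using rr by (simp add: divide_inverse ac_simps power2_eq_square)
      qed
      hence "2 * a k / r k \<le> (2 * norm d + 4) * inverse m" using rpos[of k] by (simp add: divide_le_eq)
      moreover have "2 * a k / r k \<ge> 0" using a0[of k] rpos[of k] by simp
      ultimately show "norm (2 * a k / r k) \<le> (2 * norm d + 4) * inverse (real (Suc k))" by (simp add: m_def)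
    qed
  qed
  have Dglim: "(\<lambda>k. Dg (yh k)) \<longlonglongrightarrow> Dg x" using isCont_tendsto_compose[OF Dgc yhlim] .
  have innlim: "(\<lambda>k. inner (n k) (Dg x h)) \<longlonglongrightarrow> 0" for h
  proof (rule Lim_null_comparison)
    show "eventually (\<lambda>k. norm (inner (n k) (Dg x h)) \<le> (2 * a k / r k) * norm h + norm (Dg (yh k) - Dg x) * norm h) sequentially"
    proof (intro always_eventually allI)
      fix k
      have "inner (n k) (Dg x h) = inner (n k) (Dg (yh k) h) - inner (n k) ((Dg (yh k) - Dg x) h)"
        by (simp add: blinfun.diff_left inner_diff_right)
      moreover have "\<bar>inner (n k) ((Dg (yh k) - Dg x) h)\<bar> \<le> norm (Dg (yh k) - Dg x) * norm h"
      proof -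
        have "\<bar>inner (n k) ((Dg (yh k) - Dg x) h)\<bar> \<le> norm (n k) * norm ((Dg (yh k) - Dg x) h)" by (rule Cauchy_Schwarz_ineq2)
        also have "\<dots> \<le> norm (Dg (yh k) - Dg x) * norm h" using nu[of k] by (simp add: norm_blinfun)
        finally show ?thesis .
      qed
      ultimately show "norm (inner (n k) (Dg x h)) \<le> (2 * a k / r k) * norm h + norm (Dg (yh k) - Dg x) * norm h"
        using st[of k h] by simp
    qed
    have "(\<lambda>k. norm (Dg (yh k) - Dg x)) \<longlonglongrightarrow> 0"
      using tendsto_norm_zero[OF LIM_zero[OF Dglim]] .
    thus "(\<lambda>k. (2 * a k / r k) * norm h + norm (Dg (yh k) - Dg x) * norm h) \<longlonglongrightarrow> 0"
    proof -
      assume A: "(\<lambda>k. norm (Dg (yh k) - Dg x)) \<longlonglongrightarrow> 0"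
      have "(\<lambda>k. (2 * a k / r k) * norm h + norm (Dg (yh k) - Dg x) * norm h) \<longlonglongrightarrow> 0 * norm h + 0 * norm h"
        by (intro tendsto_add tendsto_mult blim A tendsto_const)
      thus ?thesis by simp
    qed
  qed
  obtain l R where R: "strict_mono R" "(n \<circ> R) \<longlonglongrightarrow> l" "norm l = 1"
    using unit_subseq[of n] nu by blast
  have lN: "l \<in> dir_normal_cone K (g x) (Dg x d)"
  proof (rule limit_normal[where t="\<lambda>k. tt (R k)" and p="\<lambda>k. q (R k)" and n="n \<circ> R"])
    show "(\<lambda>k. tt (R k)) \<longlonglongrightarrow> 0" using LIMSEQ_subseq_LIMSEQ[OF t0 R(1)] by (simp add: o_def)
    show "\<forall>k. 0 < tt (R k)" using tt(1) by auto
    show "(\<lambda>k. inverse (tt (R k)) *\<^sub>R (q (R k) - g x)) \<longlonglongrightarrow> Dg x d"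
      using LIMSEQ_subseq_LIMSEQ[OF qlim R(1)] by (simp add: o_def)
    show "\<forall>k. (n \<circ> R) k \<in> frechet_normal_cone K (q (R k))" using nF by simp
    show "(n \<circ> R) \<longlonglongrightarrow> l" by (rule R(2))
  qed
  have lA: "inner (Dg x h) l = 0" for h
  proof -
    have "(\<lambda>k. inner ((n \<circ> R) k) (Dg x h)) \<longlonglongrightarrow> inner l (Dg x h)" by (intro tendsto_intros R(2))
    moreover have "(\<lambda>k. inner ((n \<circ> R) k) (Dg x h)) \<longlonglongrightarrow> 0"
      using LIMSEQ_subseq_LIMSEQ[OF innlim[of h] R(1)] by (simp add: o_def)
    ultimately have "inner l (Dg x h) = 0" by (rule LIMSEQ_unique)
    thus ?thesis by (simp add: inner_commute)
  qed
  have "l = 0" using rcq lA dir_sub_conv lN unfolding DirRCQ_def by blast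
  thus False using R(3) by simp
qed

lemma feasible_closed:
  fixes g :: "'a::euclidean_space \<Rightarrow> 'b::euclidean_space" and Dg :: "'a \<Rightarrow> ('a \<Rightarrow>\<^sub>L 'b)"
  assumes g_deriv: "\<And>y. (g has_derivative blinfun_apply (Dg y)) (at y)" and Kc: "closed K"
  shows "closed (feasible_set g K)"
proof -
  have gc: "continuous_on UNIV g"
    using g_deriv by (meson continuous_on_eq_continuous_within has_derivative_continuous)
  have "feasible_set g K = g -` K" by (auto simp: feasible_set_def)
  moreover have "\<And>y. isCont g y" using g_deriv has_derivative_continuous by blast
  ultimately show ?thesis using continuous_closed_vimage[OF Kc] by metis
qed

lemma feas_seq:
  fixes g :: "'a::euclidean_space \<Rightarrow> 'b::euclidean_space" and Dg :: "'a \<Rightarrow> ('a \<Rightarrow>\<^sub>L 'b)"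
  assumes g_deriv: "\<And>y. (g has_derivative blinfun_apply (Dg y)) (at y)"
    and Dgc: "isCont Dg x" and Kc: "closed K" and xK: "g x \<in> K"
    and rcq: "DirRCQ Dg g K x d"
    and hv: "\<forall>n\<in>dir_normal_cone K (g x) (Dg x d). inner n v \<le> 0"
    and t: "t \<longlonglongrightarrow> 0" "\<forall>k. t k > 0" and s: "\<forall>k. s k > 0" and st: "(\<lambda>k. s k / t k) \<longlonglongrightarrow> 0"
    and pK: "\<forall>k. p k \<in> K" and pu: "(\<lambda>k. inverse (t k) *\<^sub>R (p k - g x)) \<longlonglongrightarrow> Dg x d"
    and gz: "(\<lambda>k. inverse (s k) *\<^sub>R (g (x + t k *\<^sub>R d + s k *\<^sub>R z) - (p k + s k *\<^sub>R v))) \<longlonglongrightarrow> 0"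
  shows "\<exists>yh. (\<forall>k. yh k \<in> feasible_set g K) \<and>
     (\<lambda>k. inverse (s k) *\<^sub>R (yh k - (x + t k *\<^sub>R d + s k *\<^sub>R z))) \<longlonglongrightarrow> 0"
proof -
  define \<Phi> where "\<Phi> = feasible_set g K"
  have \<Phi>c: "closed \<Phi>" unfolding \<Phi>_def by (rule feasible_closed[OF g_deriv Kc])
  have \<Phi>ne: "\<Phi> \<noteq> {}" using xK by (auto simp: \<Phi>_def feasible_set_def)
  define y where "y k = x + t k *\<^sub>R d + s k *\<^sub>R z" for k
  have R1: "(\<lambda>k. infdist (p k + s k *\<^sub>R v) K / s k) \<longlonglongrightarrow> 0"
    by (rule clarke[OF Kc hv pK t pu s st])
  have R2: "(\<lambda>k. infdist (g (y k)) K / s k) \<longlonglongrightarrow> 0"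
  proof (rule Lim_null_comparison)
    show "eventually (\<lambda>k. norm (infdist (g (y k)) K / s k) \<le> infdist (p k + s k *\<^sub>R v) K / s k
        + norm (inverse (s k) *\<^sub>R (g (x + t k *\<^sub>R d + s k *\<^sub>R z) - (p k + s k *\<^sub>R v)))) sequentially"
    proof (intro always_eventually allI)
      fix k
      have sk: "s k > 0" using s by auto
      have "infdist (g (y k)) K \<le> infdist (p k + s k *\<^sub>R v) K + dist (g (y k)) (p k + s k *\<^sub>R v)"
        by (rule infdist_triangle)
      hence "infdist (g (y k)) K / s k \<le> infdist (p k + s k *\<^sub>R v) K / s k + dist (g (y k)) (p k + s k *\<^sub>R v) / s k"
        using sk by (simp add: add_divide_distrib[symmetric] divide_right_mono)
      moreover have "dist (g (y k)) (p k + s k *\<^sub>R v) / s k = norm (inverse (s k) *\<^sub>R (g (x + t k *\<^sub>R d + s k *\<^sub>R z) - (p k + s k *\<^sub>R v)))"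
        using sk by (simp add: y_def dist_norm divide_inverse mult.commute)
      moreover have "infdist (g (y k)) K / s k \<ge> 0" using sk by (simp add: infdist_nonneg)
      ultimately show "norm (infdist (g (y k)) K / s k) \<le> infdist (p k + s k *\<^sub>R v) K / s k
        + norm (inverse (s k) *\<^sub>R (g (x + t k *\<^sub>R d + s k *\<^sub>R z) - (p k + s k *\<^sub>R v)))" by simp
    qed
    show "(\<lambda>k. infdist (p k + s k *\<^sub>R v) K / s k
        + norm (inverse (s k) *\<^sub>R (g (x + t k *\<^sub>R d + s k *\<^sub>R z) - (p k + s k *\<^sub>R v)))) \<longlonglongrightarrow> 0"
      using tendsto_add[OF R1 tendsto_norm_zero[OF gz]] by simp
  qed
  obtain \<rho> L where \<rho>: "\<rho> > 0" "L > 0" and MS: "\<And>t d'. 0 < t \<and> t < \<rho> \<and> norm (d' - d) < \<rho> \<Longrightarrow>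
          infdist (x + t *\<^sub>R d') \<Phi> \<le> L * infdist (g (x + t *\<^sub>R d')) K"
    using metric_subreg[OF g_deriv Dgc Kc xK rcq] unfolding \<Phi>_def by blast
  define d' where "d' k = d + (s k / t k) *\<^sub>R z" for k
  have yd': "y k = x + t k *\<^sub>R d' k" for k
  proof -
    have "t k \<noteq> 0" using t(2) by (metis less_irrefl)
    thus ?thesis by (simp add: y_def d'_def scaleR_add_right)
  qed
  have d'lim: "(\<lambda>k. d' k - d) \<longlonglongrightarrow> 0"
    using tendsto_scaleR[OF st tendsto_const, of z] by (simp add: d'_def)
  have ev: "eventually (\<lambda>k. t k < \<rho> \<and> norm (d' k - d) < \<rho>) sequentially"
    using order_tendstoD(2)[OF t(1) \<rho>(1)] order_tendstoD(2)[OF tendsto_norm_zero[OF d'lim] \<rho>(1)]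
    by eventually_elim auto
  have R3: "(\<lambda>k. infdist (y k) \<Phi> / s k) \<longlonglongrightarrow> 0"
  proof (rule Lim_null_comparison)
    show "(\<lambda>k. L * (infdist (g (y k)) K / s k)) \<longlonglongrightarrow> 0"
      using tendsto_mult[OF tendsto_const R2, of L] by simp
    show "eventually (\<lambda>k. norm (infdist (y k) \<Phi> / s k) \<le> L * (infdist (g (y k)) K / s k)) sequentially"
      using ev
    proof eventually_elim
      case (elim k)
      have sk: "s k > 0" using s by auto
      have "infdist (y k) \<Phi> \<le> L * infdist (g (y k)) K"
        using MS[of "t k" "d' k"] elim t(2) unfolding yd' by auto
      hence "infdist (y k) \<Phi> / s k \<le> L * (infdist (g (y k)) K / s k)"
        using sk by (simp add: divide_right_mono)
      thus ?case using sk by (simp add: infdist_nonneg)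
    qed
  qed
  have "\<exists>w. w \<in> \<Phi> \<and> infdist (y k) \<Phi> = dist (y k) w" for k
    using infdist_attains_inf[OF \<Phi>c \<Phi>ne] by metis
  then obtain yh where yh: "\<And>k. yh k \<in> \<Phi>" "\<And>k. infdist (y k) \<Phi> = dist (y k) (yh k)"
    using choice[of "\<lambda>k w. w \<in> \<Phi> \<and> infdist (y k) \<Phi> = dist (y k) w"] by blast
  have "(\<lambda>k. inverse (s k) *\<^sub>R (yh k - y k)) \<longlonglongrightarrow> 0"
  proof (rule Lim_null_comparison[OF _ R3])
    show "eventually (\<lambda>k. norm (inverse (s k) *\<^sub>R (yh k - y k)) \<le> infdist (y k) \<Phi> / s k) sequentially"
    proof (intro always_eventually allI)
      fix k
      have sk: "s k > 0" using s by auto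
      show "norm (inverse (s k) *\<^sub>R (yh k - y k)) \<le> infdist (y k) \<Phi> / s k"
        using sk yh(2)[of k] by (simp add: dist_norm norm_minus_commute divide_inverse mult.commute)
    qed
  qed
  thus ?thesis using yh(1) unfolding \<Phi>_def y_def by blast
qed

lemma max_sq_bound:
  fixes \<theta> \<eta> :: real assumes "\<theta> \<ge> 0" "\<eta> > 0"
  shows "(max 0 (\<theta> - \<eta>))^2 \<ge> \<theta>^2 - 2 * \<theta> * \<eta>"
proof (cases "\<theta> \<ge> \<eta>")
  case True
  hence "max 0 (\<theta> - \<eta>) = \<theta> - \<eta>" by simp
  moreover have "(\<theta> - \<eta>)^2 = \<theta>^2 - 2 * \<theta> * \<eta> + \<eta>^2" by (simp add: power2_diff)
  ultimately show ?thesis by simp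
next
  case False
  hence A: "\<theta> * (\<theta> - 2 * \<eta>) \<le> 0" using assms by (intro mult_nonneg_nonpos) auto
  have "max 0 (\<theta> - \<eta>) = 0" using False by simp
  thus ?thesis using A by (simp add: power2_eq_square algebra_simps)
qed

lemma mainT2:
  fixes f :: "'a::euclidean_space \<Rightarrow> real" and g :: "'a \<Rightarrow> 'b::euclidean_space"
    and Df :: "'a \<Rightarrow> ('a \<Rightarrow>\<^sub>L real)" and D2f :: "'a \<Rightarrow> ('a \<Rightarrow>\<^sub>L ('a \<Rightarrow>\<^sub>L real))"
    and Dg :: "'a \<Rightarrow> ('a \<Rightarrow>\<^sub>L 'b)" and D2g :: "'a \<Rightarrow> ('a \<Rightarrow>\<^sub>L ('a \<Rightarrow>\<^sub>L 'b))"
  assumes f_deriv: "\<And>y. (f has_derivative blinfun_apply (Df y)) (at y)"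
    and f_deriv2: "\<And>y. (Df has_derivative blinfun_apply (D2f y)) (at y)"
    and g_deriv: "\<And>y. (g has_derivative blinfun_apply (Dg y)) (at y)"
    and g_deriv2: "\<And>y. (Dg has_derivative blinfun_apply (D2g y)) (at y)"
    and Kc: "closed K" and xK: "g x \<in> K"
    and \<rho>0: "\<rho>0 > 0"
    and sharp: "\<And>y. y \<in> feasible_set g K \<Longrightarrow> norm (y - x) < \<rho>0 \<Longrightarrow> f y \<ge> f x + \<kappa> * (infdist y S)^2"
    and \<kappa>: "\<kappa> \<ge> 0"
    and rcq: "DirRCQ Dg g K x d"
    and dC: "d \<in> critical_cone Df Dg g K x"
    and \<theta>: "\<theta> \<ge> 0"
    and growth: "\<And>\<eta>. \<eta> > 0 \<Longrightarrow> \<exists>\<tau>>0. \<forall>t. 0 < t \<and> t < \<tau> \<longrightarrow> infdist (x + t *\<^sub>R d) S \<ge> t * (\<theta> - \<eta>)"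
    and Kdne: "Kd \<noteq> {}" and Kdc: "convex Kd" and Kds: "Kd \<subseteq> second_tangent_set K (g x) (Dg x d)"
  shows "\<exists>l \<in> multipliers_c Df Dg g K x d. ereal (hessL D2f D2g x l d) - support_fun Kd l \<ge> ereal (2 * \<kappa> * \<theta>^2)"
proof -
  define u where "u = Dg x d"
  define C where "C = conv_dir_normal_cone K (g x) u"
  have uT: "u \<in> tangent_cone K (g x)" and Dfd: "Df x d \<le> 0" using dC by (auto simp: critical_cone_def u_def)
  note Cp = conv_cone_props[OF uT, folded C_def]
  have Dgc: "isCont Dg x" using has_derivative_continuous[OF g_deriv2] .
  define c where "c = 2 * \<kappa> * \<theta>^2"
  have hyp: "Df x z + (D2f x d d - c) \<ge> 0"
    if w: "w \<in> Kd" and hv0: "\<forall>n\<in>C. inner n (Dg x z + D2g x d d - w) \<le> 0" for z w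
  proof -
    define v where "v = Dg x z + D2g x d d - w"
    have hv: "\<forall>n\<in>dir_normal_cone K (g x) (Dg x d). inner n v \<le> 0"
      using hv0 dir_sub_conv unfolding C_def u_def v_def by blast
    from w Kds obtain t wk where t: "\<forall>k. t k > 0" "t \<longlonglongrightarrow> 0" and wk: "wk \<longlonglongrightarrow> w"
      and inK: "\<forall>k. g x + t k *\<^sub>R u + ((1/2) * (t k)^2) *\<^sub>R wk k \<in> K"
      unfolding second_tangent_set_def u_def by blast
    define s where "s k = (1/2) * (t k)^2" for k
    define p where "p k = g x + t k *\<^sub>R u + s k *\<^sub>R wk k" for k
    have s: "\<forall>k. s k > 0"
    proof
      fix k have "t k > 0" using t(1) by blast
      thus "s k > 0" by (simp add: s_def)
    qed
    have st: "(\<lambda>k. s k / t k) \<longlonglongrightarrow> 0"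
    proof -
      have "(\<lambda>k. (1/2) * t k) \<longlonglongrightarrow> (1/2) * 0" by (intro tendsto_intros t(2))
      moreover have "(\<lambda>k. s k / t k) = (\<lambda>k. (1/2) * t k)"
      proof
        fix k have "t k > 0" using t(1) by blast
        thus "s k / t k = (1/2) * t k" by (simp add: s_def power2_eq_square)
      qed
      ultimately show ?thesis by simp
    qed
    have pK: "\<forall>k. p k \<in> K" using inK by (simp add: p_def s_def)
    have pu: "(\<lambda>k. inverse (t k) *\<^sub>R (p k - g x)) \<longlonglongrightarrow> Dg x d"
    proof -
      have "inverse (t k) *\<^sub>R (p k - g x) = u + ((1/2) * t k) *\<^sub>R wk k" for k
        using t(1)[rule_format, of k] by (simp add: p_def s_def scaleR_add_right power2_eq_square)
      moreover have "(\<lambda>k. u + ((1/2) * t k) *\<^sub>R wk k) \<longlonglongrightarrow> u + ((1/2) * 0) *\<^sub>R w"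
        by (intro tendsto_intros t(2) wk)
      ultimately show ?thesis by (simp add: u_def)
    qed
    have A: "(\<lambda>k. inverse (s k) *\<^sub>R (g (x + t k *\<^sub>R d + s k *\<^sub>R z) - g x - t k *\<^sub>R Dg x d)) \<longlonglongrightarrow> Dg x z + D2g x d d"
      using seqT2[OF g_deriv g_deriv2[of x] t(2) t(1) tendsto_const[of z], where d=d] by (simp add: s_def)
    have gz: "(\<lambda>k. inverse (s k) *\<^sub>R (g (x + t k *\<^sub>R d + s k *\<^sub>R z) - (p k + s k *\<^sub>R v))) \<longlonglongrightarrow> 0"
    proof -
      have "inverse (s k) *\<^sub>R (g (x + t k *\<^sub>R d + s k *\<^sub>R z) - (p k + s k *\<^sub>R v))
          = inverse (s k) *\<^sub>R (g (x + t k *\<^sub>R d + s k *\<^sub>R z) - g x - t k *\<^sub>R Dg x d) - wk k - v" for k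
      proof -
        have "s k \<noteq> 0" using s by (metis less_irrefl)
        thus ?thesis by (simp add: p_def u_def scaleR_diff_right scaleR_add_right algebra_simps)
      qed
      moreover have "(\<lambda>k. inverse (s k) *\<^sub>R (g (x + t k *\<^sub>R d + s k *\<^sub>R z) - g x - t k *\<^sub>R Dg x d) - wk k - v)
          \<longlonglongrightarrow> (Dg x z + D2g x d d) - w - v"
        by (intro tendsto_diff A wk tendsto_const)
      ultimately show ?thesis by (simp add: v_def)
    qed
    obtain yh where yhF: "\<forall>k. yh k \<in> feasible_set g K"
      and yhl: "(\<lambda>k. inverse (s k) *\<^sub>R (yh k - (x + t k *\<^sub>R d + s k *\<^sub>R z))) \<longlonglongrightarrow> 0"
      using feas_seq[OF g_deriv Dgc Kc xK rcq hv t(2) t(1) s st pK pu gz] by blast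
    define z' where "z' k = z + inverse (s k) *\<^sub>R (yh k - (x + t k *\<^sub>R d + s k *\<^sub>R z))" for k
    have z'l: "z' \<longlonglongrightarrow> z" unfolding z'_def[abs_def] using tendsto_add[OF tendsto_const yhl, of z] by simp
    have yhe: "yh k = x + t k *\<^sub>R d + s k *\<^sub>R z' k" for k
    proof -
      have "s k \<noteq> 0" using s by (metis less_irrefl)
      thus ?thesis by (simp add: z'_def scaleR_add_right)
    qed
    define Q where "Q k = inverse (s k) * (f (yh k) - f x - t k * Df x d)" for k
    have Qe: "Q = (\<lambda>k. inverse ((1/2) * (t k)^2) *\<^sub>R (f (x + t k *\<^sub>R d + ((1/2) * (t k)^2) *\<^sub>R z' k) - f x - t k *\<^sub>R Df x d))"
    proof
      fix k show "Q k = inverse ((1/2) * (t k)^2) *\<^sub>R (f (x + t k *\<^sub>R d + ((1/2) * (t k)^2) *\<^sub>R z' k) - f x - t k *\<^sub>R Df x d)"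
        unfolding Q_def yhe s_def by simp
    qed
    have Ql: "Q \<longlonglongrightarrow> Df x z + D2f x d d"
      unfolding Qe by (rule seqT2[OF f_deriv f_deriv2[of x] t(2) t(1) z'l])
    have yhx: "yh \<longlonglongrightarrow> x"
    proof -
      have "(\<lambda>k. x + t k *\<^sub>R d + s k *\<^sub>R z' k) \<longlonglongrightarrow> x + 0 *\<^sub>R d + 0 *\<^sub>R z"
      proof (intro tendsto_intros t(2) z'l)
        show "s \<longlonglongrightarrow> 0" using tendsto_mult[OF tendsto_const tendsto_power[OF t(2), of 2], of "1/2"]
          by (simp add: s_def[abs_def])
      qed
      moreover have "yh = (\<lambda>k. x + t k *\<^sub>R d + s k *\<^sub>R z' k)" using yhe by auto
      ultimately show ?thesis by simp
    qed
    have evn: "eventually (\<lambda>k. norm (yh k - x) < \<rho>0) sequentially"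
      using order_tendstoD(2)[OF tendsto_norm_zero[OF LIM_zero[OF yhx]] \<rho>0] by simp
    have fge: "eventually (\<lambda>k. f (yh k) \<ge> f x + \<kappa> * (infdist (yh k) S)^2) sequentially"
      using evn
    proof eventually_elim
      case (elim k)
      have "yh k \<in> feasible_set g K" using yhF by blast
      from sharp[OF this elim] show ?case .
    qed
    have fdiff: "f (yh k) - f x = t k * Df x d + s k * Q k" for k
    proof -
      have "s k \<noteq> 0" using s by (metis less_irrefl)
      hence "s k * inverse (s k) = 1" by simp
      thus ?thesis unfolding Q_def by (simp add: mult.assoc[symmetric])
    qed
    have Dfd0: "Df x d \<ge> 0"
    proof (rule tendsto_le[OF _ tendsto_const])
      have "(\<lambda>k. - ((s k / t k) * Q k)) \<longlonglongrightarrow> - (0 * (Df x z + D2f x d d))"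
        by (intro tendsto_intros st Ql)
      thus "(\<lambda>k. - ((s k / t k) * Q k)) \<longlonglongrightarrow> 0" by simp
      show "eventually (\<lambda>k. - ((s k / t k) * Q k) \<le> Df x d) sequentially"
        using fge
      proof eventually_elim
        case (elim k)
        have tk: "t k > 0" using t(1) by auto
        have "\<kappa> * (infdist (yh k) S)^2 \<ge> 0" using \<kappa> by simp
        hence "t k * Df x d + s k * Q k \<ge> 0" using elim fdiff[of k] by linarith
        hence "(t k * Df x d + s k * Q k) / t k \<ge> 0" using tk by simp
        moreover have "(t k * Df x d + s k * Q k) / t k = Df x d + (s k / t k) * Q k"
          using tk by (simp add: add_divide_distrib)
        ultimately have "Df x d + (s k / t k) * Q k \<ge> 0" by simp
        thus ?case by simp
      qed
    qed simp
    hence Dfd00: "Df x d = 0" using Dfd by simp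
    show ?thesis
    proof (rule ccontr)
      assume neg: "\<not> ?thesis"
      define G where "G = Df x z + D2f x d d"
      define gap where "gap = c - G"
      have gap: "gap > 0" using neg by (simp add: gap_def G_def)
      define \<eta> where "\<eta> = gap / (8 * \<kappa> * \<theta> + 1)"
      have kt: "\<kappa> * \<theta> \<ge> 0" using \<kappa> \<theta> by simp
      have \<eta>: "\<eta> > 0" unfolding \<eta>_def using gap kt by (intro divide_pos_pos) auto
      obtain \<tau> where \<tau>: "\<tau> > 0" "\<And>t. 0 < t \<and> t < \<tau> \<Longrightarrow> infdist (x + t *\<^sub>R d) S \<ge> t * (\<theta> - \<eta>)"
        using growth[OF \<eta>] by blast
      define m where "m k = max 0 (\<theta> - \<eta> - (1/2) * t k * norm (z' k))" for k
      have ml: "m \<longlonglongrightarrow> max 0 (\<theta> - \<eta> - (1/2) * 0 * norm z)"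
        unfolding m_def[abs_def] by (intro tendsto_intros t(2) z'l)
      have evQ: "eventually (\<lambda>k. 2 * \<kappa> * (m k)^2 \<le> Q k) sequentially"
        using fge order_tendstoD(2)[OF t(2) \<tau>(1)]
      proof eventually_elim
        case (elim k)
        have tk: "t k > 0" using t(1) by auto
        have sk: "s k > 0" using s by auto
        have "infdist (x + t k *\<^sub>R d) S \<le> infdist (yh k) S + dist (x + t k *\<^sub>R d) (yh k)"
          by (rule infdist_triangle)
        moreover have "dist (x + t k *\<^sub>R d) (yh k) = s k * norm (z' k)"
          using sk by (simp add: yhe dist_norm)
        moreover have "infdist (x + t k *\<^sub>R d) S \<ge> t k * (\<theta> - \<eta>)" using \<tau>(2) tk elim(2) by blast
        ultimately have "infdist (yh k) S \<ge> t k * (\<theta> - \<eta>) - s k * norm (z' k)" by linarith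
        moreover have "t k * (\<theta> - \<eta>) - s k * norm (z' k) = t k * (\<theta> - \<eta> - (1/2) * t k * norm (z' k))"
          by (simp add: s_def power2_eq_square algebra_simps)
        ultimately have "infdist (yh k) S \<ge> t k * m k"
          using tk infdist_nonneg[of "yh k" S] unfolding m_def by (auto simp: max_def)
        moreover have "t k * m k \<ge> 0" using tk by (simp add: m_def)
        ultimately have "(infdist (yh k) S)^2 \<ge> (t k * m k)^2" by (intro power_mono) auto
        hence "\<kappa> * (infdist (yh k) S)^2 \<ge> \<kappa> * (t k * m k)^2" using \<kappa> by (intro mult_left_mono)
        hence "f (yh k) - f x \<ge> \<kappa> * (t k * m k)^2" using elim(1) by linarith
        hence "Q k \<ge> inverse (s k) * (\<kappa> * (t k * m k)^2)"
          using sk by (simp add: Q_def Dfd00 mult_left_mono)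
        moreover have "inverse (s k) * (\<kappa> * (t k * m k)^2) = 2 * \<kappa> * (m k)^2"
          using tk by (simp add: s_def power_mult_distrib field_simps)
        ultimately show ?case by simp
      qed
      have "G \<ge> 2 * \<kappa> * (max 0 (\<theta> - \<eta>))^2"
        unfolding G_def
      proof (rule tendsto_le[OF _ Ql])
        show "(\<lambda>k. 2 * \<kappa> * (m k)^2) \<longlonglongrightarrow> 2 * \<kappa> * (max 0 (\<theta> - \<eta>))^2"
          using tendsto_mult[OF tendsto_const tendsto_power[OF ml, of 2], of "2 * \<kappa>"] by simp
        show "eventually (\<lambda>k. 2 * \<kappa> * (m k)^2 \<le> Q k) sequentially" by (rule evQ)
      qed simp
      moreover have "2 * \<kappa> * (max 0 (\<theta> - \<eta>))^2 \<ge> 2 * \<kappa> * (\<theta>^2 - 2 * \<theta> * \<eta>)"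
        using max_sq_bound[OF \<theta> \<eta>] \<kappa> by (intro mult_left_mono) auto
      moreover have "4 * (\<kappa> * \<theta>) * \<eta> \<le> gap / 2"
      proof -
        have X: "4 * (\<kappa> * \<theta>) / (8 * (\<kappa> * \<theta>) + 1) \<le> 1/2" using kt by (simp add: divide_le_eq)
        have E: "4 * (\<kappa> * \<theta>) * \<eta> = gap * (4 * (\<kappa> * \<theta>) / (8 * (\<kappa> * \<theta>) + 1))"
          unfolding \<eta>_def by (simp add: ac_simps)
        have "gap * (4 * (\<kappa> * \<theta>) / (8 * (\<kappa> * \<theta>) + 1)) \<le> gap * (1/2)"
          by (rule mult_left_mono[OF X]) (use gap in simp)
        thus ?thesis unfolding E by simp
      qed
      moreover have "2 * \<kappa> * (\<theta>^2 - 2 * \<theta> * \<eta>) = c - 4 * (\<kappa> * \<theta>) * \<eta>"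
        by (simp add: c_def algebra_simps)
      ultimately have "G \<ge> c - gap / 2" by linarith
      thus False using gap unfolding gap_def by (simp add: field_simps)
    qed
  qed
  have qual: "\<And>l. l \<in> C \<Longrightarrow> (\<forall>v. inner (Dg x v) l = 0) \<Longrightarrow> l = 0"
    using rcq unfolding DirRCQ_def C_def u_def by blast
  have "\<exists>l\<in>C. (\<forall>v. Df x v + inner (Dg x v) l = 0) \<and> (\<forall>w\<in>Kd. (D2f x d d - c) + inner l (D2g x d d - w) \<ge> 0)"
    apply (rule sep[where C=C and A="Dg x" and a="Df x" and h="D2g x d d" and e="D2f x d d - c" and Kd=Kd])
           apply (rule Cp(1))
          apply (rule Cp(2))
         apply (rule Cp(3))
        apply (erule Cp(4), assumption)
       apply (erule qual, assumption)
      apply (rule Kdc)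
     apply (rule Kdne)
    apply (erule hyp, assumption)
    done
  then obtain l where lC: "l \<in> C" and l1: "\<forall>v. Df x v + inner (Dg x v) l = 0"
    and l2: "\<forall>w\<in>Kd. (D2f x d d - c) + inner l (D2g x d d - w) \<ge> 0"
    by blast
  have lM: "l \<in> multipliers_c Df Dg g K x d"
    using lC l1 unfolding multipliers_c_def C_def u_def by blast
  have sup: "support_fun Kd l \<le> ereal (hessL D2f D2g x l d - c)"
    unfolding support_fun_def
  proof (rule SUP_least)
    fix w assume "w \<in> Kd"
    hence "(D2f x d d - c) + inner l (D2g x d d - w) \<ge> 0" using l2 by blast
    thus "ereal (inner l w) \<le> ereal (hessL D2f D2g x l d - c)"
      by (simp add: hessL_def inner_diff_right inner_commute)
  qed
  have "ereal (hessL D2f D2g x l d) - ereal (hessL D2f D2g x l d - c) \<le> ereal (hessL D2f D2g x l d) - support_fun Kd l"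
    by (rule ereal_minus_mono[OF order_refl sup])
  hence "ereal c \<le> ereal (hessL D2f D2g x l d) - support_fun Kd l" by simp
  thus ?thesis using lM unfolding c_def by blast
qed

lemma mainTpp:
  fixes f :: "'a::euclidean_space \<Rightarrow> real" and g :: "'a \<Rightarrow> 'b::euclidean_space"
    and Df :: "'a \<Rightarrow> ('a \<Rightarrow>\<^sub>L real)" and D2f :: "'a \<Rightarrow> ('a \<Rightarrow>\<^sub>L ('a \<Rightarrow>\<^sub>L real))"
    and Dg :: "'a \<Rightarrow> ('a \<Rightarrow>\<^sub>L 'b)" and D2g :: "'a \<Rightarrow> ('a \<Rightarrow>\<^sub>L ('a \<Rightarrow>\<^sub>L 'b))"
  assumes f_deriv: "\<And>y. (f has_derivative blinfun_apply (Df y)) (at y)"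
    and f_deriv2: "\<And>y. (Df has_derivative blinfun_apply (D2f y)) (at y)"
    and g_deriv: "\<And>y. (g has_derivative blinfun_apply (Dg y)) (at y)"
    and g_deriv2: "\<And>y. (Dg has_derivative blinfun_apply (D2g y)) (at y)"
    and Kc: "closed K" and xK: "g x \<in> K"
    and \<rho>0: "\<rho>0 > 0"
    and locmin: "\<And>y. y \<in> feasible_set g K \<Longrightarrow> norm (y - x) < \<rho>0 \<Longrightarrow> f y \<ge> f x"
    and rcq: "DirRCQ Dg g K x d"
    and dC: "d \<in> critical_cone Df Dg g K x"
    and Kdne: "Kd \<noteq> {}" and Kdc: "convex Kd" and Kds: "Kd \<subseteq> asymptotic_second_tangent_cone K (g x) (Dg x d)"
  shows "\<exists>l \<in> multipliers_c Df Dg g K x d. support_fun Kd l \<le> 0"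
proof -
  define u where "u = Dg x d"
  define C where "C = conv_dir_normal_cone K (g x) u"
  have uT: "u \<in> tangent_cone K (g x)" and Dfd: "Df x d \<le> 0" using dC by (auto simp: critical_cone_def u_def)
  note Cp = conv_cone_props[OF uT, folded C_def]
  have Dgc: "isCont Dg x" using has_derivative_continuous[OF g_deriv2] .
  have hyp: "Df x z + 0 \<ge> 0"
    if w: "w \<in> Kd" and hv0: "\<forall>n\<in>C. inner n (Dg x z + 0 - w) \<le> 0" for z w
  proof -
    define v where "v = Dg x z - w"
    have hv: "\<forall>n\<in>dir_normal_cone K (g x) (Dg x d). inner n v \<le> 0"
      using hv0 dir_sub_conv unfolding C_def u_def v_def by fastforce
    from w Kds obtain t r wk where tr: "\<forall>k. t k > 0 \<and> r k > 0" and t0: "t \<longlonglongrightarrow> 0" and r0: "r \<longlonglongrightarrow> 0"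
      and trl: "(\<lambda>k. t k / r k) \<longlonglongrightarrow> 0" and wk: "wk \<longlonglongrightarrow> w"
      and inK: "\<forall>k. g x + t k *\<^sub>R u + ((1/2) * t k * r k) *\<^sub>R wk k \<in> K"
      unfolding asymptotic_second_tangent_cone_def u_def by blast
    have t1: "\<forall>k. t k > 0" and r1: "\<forall>k. r k > 0" using tr by auto
    define s where "s k = (1/2) * t k * r k" for k
    define p where "p k = g x + t k *\<^sub>R u + s k *\<^sub>R wk k" for k
    have s: "\<forall>k. s k > 0"
    proof
      fix k have "t k > 0" "r k > 0" using tr by auto
      thus "s k > 0" by (simp add: s_def)
    qed
    have st: "(\<lambda>k. s k / t k) \<longlonglongrightarrow> 0"
    proof -
      have "(\<lambda>k. (1/2) * r k) \<longlonglongrightarrow> (1/2) * 0" by (intro tendsto_intros r0)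
      moreover have "(\<lambda>k. s k / t k) = (\<lambda>k. (1/2) * r k)"
      proof
        fix k have "t k > 0" using tr by blast
        thus "s k / t k = (1/2) * r k" by (simp add: s_def)
      qed
      ultimately show ?thesis by simp
    qed
    have pK: "\<forall>k. p k \<in> K" using inK by (simp add: p_def s_def)
    have pu: "(\<lambda>k. inverse (t k) *\<^sub>R (p k - g x)) \<longlonglongrightarrow> Dg x d"
    proof -
      have "(\<lambda>k. inverse (t k) *\<^sub>R (p k - g x)) = (\<lambda>k. u + ((1/2) * r k) *\<^sub>R wk k)"
      proof
        fix k have "t k > 0" using tr by blast
        thus "inverse (t k) *\<^sub>R (p k - g x) = u + ((1/2) * r k) *\<^sub>R wk k"
          by (simp add: p_def s_def scaleR_add_right)
      qed
      moreover have "(\<lambda>k. u + ((1/2) * r k) *\<^sub>R wk k) \<longlonglongrightarrow> u + ((1/2) * 0) *\<^sub>R w"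
        by (intro tendsto_intros r0 wk)
      ultimately show ?thesis by (simp add: u_def)
    qed
    have A: "(\<lambda>k. inverse (s k) *\<^sub>R (g (x + t k *\<^sub>R d + s k *\<^sub>R z) - g x - t k *\<^sub>R Dg x d)) \<longlonglongrightarrow> Dg x z"
      unfolding s_def by (rule seqTpp[OF g_deriv g_deriv2[of x] t0 t1 r0 r1 trl tendsto_const])
    have gz: "(\<lambda>k. inverse (s k) *\<^sub>R (g (x + t k *\<^sub>R d + s k *\<^sub>R z) - (p k + s k *\<^sub>R v))) \<longlonglongrightarrow> 0"
    proof -
      have "(\<lambda>k. inverse (s k) *\<^sub>R (g (x + t k *\<^sub>R d + s k *\<^sub>R z) - (p k + s k *\<^sub>R v)))
          = (\<lambda>k. inverse (s k) *\<^sub>R (g (x + t k *\<^sub>R d + s k *\<^sub>R z) - g x - t k *\<^sub>R Dg x d) - wk k - v)"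
      proof
        fix k
        have "s k \<noteq> 0" using s by (metis less_irrefl)
        thus "inverse (s k) *\<^sub>R (g (x + t k *\<^sub>R d + s k *\<^sub>R z) - (p k + s k *\<^sub>R v))
          = inverse (s k) *\<^sub>R (g (x + t k *\<^sub>R d + s k *\<^sub>R z) - g x - t k *\<^sub>R Dg x d) - wk k - v"
          by (simp add: p_def u_def scaleR_diff_right scaleR_add_right algebra_simps)
      qed
      moreover have "(\<lambda>k. inverse (s k) *\<^sub>R (g (x + t k *\<^sub>R d + s k *\<^sub>R z) - g x - t k *\<^sub>R Dg x d) - wk k - v)
          \<longlonglongrightarrow> Dg x z - w - v"
        by (intro tendsto_diff A wk tendsto_const)
      ultimately show ?thesis by (simp add: v_def)
    qed
    obtain yh where yhF: "\<forall>k. yh k \<in> feasible_set g K"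
      and yhl: "(\<lambda>k. inverse (s k) *\<^sub>R (yh k - (x + t k *\<^sub>R d + s k *\<^sub>R z))) \<longlonglongrightarrow> 0"
      using feas_seq[OF g_deriv Dgc Kc xK rcq hv t0 t1 s st pK pu gz] by blast
    define z' where "z' k = z + inverse (s k) *\<^sub>R (yh k - (x + t k *\<^sub>R d + s k *\<^sub>R z))" for k
    have z'l: "z' \<longlonglongrightarrow> z" unfolding z'_def[abs_def] using tendsto_add[OF tendsto_const yhl, of z] by simp
    have yhe: "yh k = x + t k *\<^sub>R d + s k *\<^sub>R z' k" for k
    proof -
      have "s k \<noteq> 0" using s by (metis less_irrefl)
      thus ?thesis by (simp add: z'_def scaleR_add_right)
    qed
    define Q where "Q k = inverse (s k) * (f (yh k) - f x - t k * Df x d)" for k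
    have Qe: "Q = (\<lambda>k. inverse ((1/2) * t k * r k) *\<^sub>R (f (x + t k *\<^sub>R d + ((1/2) * t k * r k) *\<^sub>R z' k) - f x - t k *\<^sub>R Df x d))"
    proof
      fix k show "Q k = inverse ((1/2) * t k * r k) *\<^sub>R (f (x + t k *\<^sub>R d + ((1/2) * t k * r k) *\<^sub>R z' k) - f x - t k *\<^sub>R Df x d)"
        unfolding Q_def yhe s_def by simp
    qed
    have Ql: "Q \<longlonglongrightarrow> Df x z"
      unfolding Qe by (rule seqTpp[OF f_deriv f_deriv2[of x] t0 t1 r0 r1 trl z'l])
    have s0: "s \<longlonglongrightarrow> 0"
    proof -
      have "(\<lambda>k. (1/2) * t k * r k) \<longlonglongrightarrow> (1/2) * 0 * 0" by (intro tendsto_intros t0 r0)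
      thus ?thesis by (simp add: s_def[abs_def])
    qed
    have yhx: "yh \<longlonglongrightarrow> x"
    proof -
      have "(\<lambda>k. x + t k *\<^sub>R d + s k *\<^sub>R z' k) \<longlonglongrightarrow> x + 0 *\<^sub>R d + 0 *\<^sub>R z"
        by (intro tendsto_intros t0 z'l s0)
      moreover have "yh = (\<lambda>k. x + t k *\<^sub>R d + s k *\<^sub>R z' k)" using yhe by auto
      ultimately show ?thesis by simp
    qed
    have evn: "eventually (\<lambda>k. norm (yh k - x) < \<rho>0) sequentially"
      using order_tendstoD(2)[OF tendsto_norm_zero[OF LIM_zero[OF yhx]] \<rho>0] by simp
    have "Df x z \<ge> 0"
    proof (rule tendsto_le[OF _ Ql tendsto_const])
      show "eventually (\<lambda>k. 0 \<le> Q k) sequentially"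
        using evn
      proof eventually_elim
        case (elim k)
        have "yh k \<in> feasible_set g K" using yhF by blast
        from locmin[OF this elim] have "f (yh k) - f x \<ge> 0" by simp
        moreover have "t k * Df x d \<le> 0" using Dfd t1 by (simp add: mult_nonneg_nonpos less_imp_le)
        ultimately have "f (yh k) - f x - t k * Df x d \<ge> 0" by linarith
        moreover have "inverse (s k) > 0" using s by simp
        ultimately show ?case unfolding Q_def by simp
      qed
    qed simp
    thus ?thesis by simp
  qed
  have qual: "\<And>l. l \<in> C \<Longrightarrow> (\<forall>v. inner (Dg x v) l = 0) \<Longrightarrow> l = 0"
    using rcq unfolding DirRCQ_def C_def u_def by blast
  have "\<exists>l\<in>C. (\<forall>v. Df x v + inner (Dg x v) l = 0) \<and> (\<forall>w\<in>Kd. 0 + inner l (0 - w) \<ge> 0)"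
    apply (rule sep[where C=C and A="Dg x" and a="Df x" and h=0 and e=0 and Kd=Kd])
           apply (rule Cp(1))
          apply (rule Cp(2))
         apply (rule Cp(3))
        apply (erule Cp(4), assumption)
       apply (erule qual, assumption)
      apply (rule Kdc)
     apply (rule Kdne)
    apply (erule hyp, assumption)
    done
  then obtain l where lC: "l \<in> C" and l1: "\<forall>v. Df x v + inner (Dg x v) l = 0"
    and l2: "\<forall>w\<in>Kd. 0 + inner l (0 - w) \<ge> 0"
    by blast
  have lM: "l \<in> multipliers_c Df Dg g K x d"
    using lC l1 unfolding multipliers_c_def C_def u_def by blast
  have sup: "support_fun Kd l \<le> 0"
    unfolding support_fun_def
  proof (rule SUP_least)
    fix w assume "w \<in> Kd"
    hence "0 + inner l (0 - w) \<ge> 0" using l2 by blast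
    thus "ereal (inner l w) \<le> 0" by (simp add: inner_minus_right)
  qed
  show ?thesis using lM sup by blast
qed

lemma infdist_lessE:
  assumes "infdist y A < r" "A \<noteq> {}"
  obtains a where "a \<in> A" "dist y a < r"
proof -
  have "Inf (dist y ` A) < r" using assms by (simp add: infdist_notempty)
  then obtain z where "z \<in> dist y ` A" "z < r" using cInf_lessD[of "dist y ` A" r] assms(2) by blast
  thus ?thesis using that by blast
qed

lemma infdist_geI:
  assumes "A \<noteq> {}" "\<And>a. a \<in> A \<Longrightarrow> r \<le> dist y a"
  shows "r \<le> infdist y A"
  using assms by (simp add: infdist_notempty cINF_greatest)

lemma local_sharp:
  assumes sharp: "weak_sharp_min2 f g K xbar \<kappa> \<delta>"
    and xS: "x \<in> optimal_set f g K" and xb: "x \<in> ball xbar \<delta>"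
  shows "\<exists>\<rho>0>0. \<forall>y. y \<in> feasible_set g K \<longrightarrow> norm (y - x) < \<rho>0 \<longrightarrow>
           f y \<ge> f x + \<kappa> * (infdist y (optimal_set f g K))^2"
proof -
  have xbF: "xbar \<in> feasible_set g K" and ws: "\<forall>y \<in> feasible_set g K \<inter> ball xbar \<delta>.
        f y \<ge> f xbar + \<kappa> * (infdist y (optimal_set f g K))\<^sup>2"
    using sharp unfolding weak_sharp_min2_def by auto
  have fx: "f x \<le> f xbar" using xS xbF unfolding optimal_set_def by blast
  define \<rho>0 where "\<rho>0 = \<delta> - dist xbar x"
  have "\<rho>0 > 0" using xb by (simp add: \<rho>0_def)
  moreover have "f y \<ge> f x + \<kappa> * (infdist y (optimal_set f g K))^2"
    if "y \<in> feasible_set g K" "norm (y - x) < \<rho>0" for y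
  proof -
    have "dist xbar y \<le> dist xbar x + dist x y" by (rule dist_triangle)
    hence "y \<in> ball xbar \<delta>" using that(2) by (simp add: \<rho>0_def dist_norm norm_minus_commute)
    hence "f xbar + \<kappa> * (infdist y (optimal_set f g K))\<^sup>2 \<le> f y" using ws that(1) by blast
    thus ?thesis using fx by linarith
  qed
  ultimately show ?thesis by blast
qed

lemma growth_eps:
  fixes S :: "'a::euclidean_space set"
  assumes xS: "x \<in> S" and dN: "d \<in> eps_prox_normal_cone S x \<epsilon>" and \<eta>: "\<eta> > 0"
  shows "\<exists>\<tau>>0. \<forall>t. 0 < t \<and> t < \<tau> \<longrightarrow> infdist (x + t *\<^sub>R d) S \<ge> t * ((1 - 2 * \<epsilon>) * norm d - \<eta>)"
proof -
  define N where "N = prox_normal_cone S x"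
  have N0: "0 \<in> N" using xS unfolding N_def prox_normal_cone_def by (auto intro: exI[of _ 1])
  have "infdist d N \<le> \<epsilon> * norm d" using dN unfolding eps_prox_normal_cone_def N_def by simp
  hence "infdist d N < \<epsilon> * norm d + \<eta>/2" using \<eta> by simp
  then obtain v where vN: "v \<in> N" and dv: "dist d v < \<epsilon> * norm d + \<eta>/2"
    using infdist_lessE N0 by blast
  from vN obtain \<tau>0 where \<tau>0: "\<tau>0 > 0" and near: "\<forall>y\<in>S. dist (x + \<tau>0 *\<^sub>R v) x \<le> dist (x + \<tau>0 *\<^sub>R v) y"
    unfolding N_def prox_normal_cone_def by blast
  have Sne: "S \<noteq> {}" using xS by auto
  show ?thesis
  proof (intro exI[of _ \<tau>0] conjI allI impI \<tau>0)
    fix t assume t: "0 < t \<and> t < \<tau>0"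
    have "t * norm v \<le> infdist (x + t *\<^sub>R v) S"
    proof (rule infdist_geI[OF Sne])
      fix y assume "y \<in> S"
      hence A: "\<tau>0 * norm v \<le> dist (x + \<tau>0 *\<^sub>R v) y" using near \<tau>0 by (simp add: dist_norm)
      have "dist (x + \<tau>0 *\<^sub>R v) y \<le> dist (x + \<tau>0 *\<^sub>R v) (x + t *\<^sub>R v) + dist (x + t *\<^sub>R v) y" by (rule dist_triangle)
      moreover have "dist (x + \<tau>0 *\<^sub>R v) (x + t *\<^sub>R v) = (\<tau>0 - t) * norm v"
        using t by (simp add: dist_norm scaleR_diff_left[symmetric])
      ultimately show "t * norm v \<le> dist (x + t *\<^sub>R v) y" using A by (simp add: algebra_simps)
    qed
    moreover have "infdist (x + t *\<^sub>R v) S \<le> infdist (x + t *\<^sub>R d) S + dist (x + t *\<^sub>R v) (x + t *\<^sub>R d)"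
      by (rule infdist_triangle)
    moreover have "dist (x + t *\<^sub>R v) (x + t *\<^sub>R d) = t * dist d v"
      using t by (simp add: dist_norm scaleR_diff_right[symmetric] norm_minus_commute)
    moreover have "norm v \<ge> norm d - dist d v" using norm_triangle_sub[of d v] by (simp add: dist_norm)
    moreover have "t * (norm d - dist d v) \<le> t * norm v"
      by (rule mult_left_mono) (use t \<open>norm v \<ge> norm d - dist d v\<close> in auto)
    ultimately have "infdist (x + t *\<^sub>R d) S \<ge> t * (norm d - dist d v) - t * dist d v"
      by linarith
    moreover have "t * (norm d - dist d v) - t * dist d v \<ge> t * ((1 - 2 * \<epsilon>) * norm d - \<eta>)"
    proof -
      have "norm d - 2 * dist d v \<ge> (1 - 2 * \<epsilon>) * norm d - \<eta>" using dv by (simp add: algebra_simps)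
      hence "t * (norm d - 2 * dist d v) \<ge> t * ((1 - 2 * \<epsilon>) * norm d - \<eta>)"
        by (rule mult_left_mono) (use t in auto)
      moreover have "t * (norm d - dist d v) - t * dist d v = t * (norm d - 2 * dist d v)"
        by (simp add: algebra_simps)
      ultimately show ?thesis by linarith
    qed
    ultimately show "infdist (x + t *\<^sub>R d) S \<ge> t * ((1 - 2 * \<epsilon>) * norm d - \<eta>)" by linarith
  qed
qed

lemma growth_tan:
  fixes S :: "'a::euclidean_space set"
  assumes xS: "x \<in> S" and \<eta>: "\<eta> > 0"
  shows "\<exists>\<tau>>0. \<forall>t. 0 < t \<and> t < \<tau> \<longrightarrow> infdist (x + t *\<^sub>R d) S \<ge> t * (infdist d (tangent_cone S x) - \<eta>)"
proof (rule ccontr)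
  assume neg: "\<not> ?thesis"
  define \<theta> where "\<theta> = infdist d (tangent_cone S x)"
  have Sne: "S \<noteq> {}" using xS by auto
  have "\<exists>z. 0 < fst z \<and> fst z < inverse (real (Suc k)) \<and> snd z \<in> S \<and> dist (x + fst z *\<^sub>R d) (snd z) < fst z * (\<theta> - \<eta>)" for k
  proof -
    have "inverse (real (Suc k)) > 0" by simp
    then obtain t where t: "0 < t" "t < inverse (real (Suc k))" "infdist (x + t *\<^sub>R d) S < t * (\<theta> - \<eta>)"
      using neg unfolding \<theta>_def by (meson not_le)
    then obtain s where "s \<in> S" "dist (x + t *\<^sub>R d) s < t * (\<theta> - \<eta>)" using infdist_lessE Sne by metis
    thus ?thesis using t by (intro exI[of _ "(t, s)"]) auto
  qed
  then obtain Z where Z: "\<forall>k. 0 < fst (Z k) \<and> fst (Z k) < inverse (real (Suc k)) \<and> snd (Z k) \<in> S \<and>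
      dist (x + fst (Z k) *\<^sub>R d) (snd (Z k)) < fst (Z k) * (\<theta> - \<eta>)"
    using choice[of "\<lambda>k z. 0 < fst z \<and> fst z < inverse (real (Suc k)) \<and> snd z \<in> S \<and> dist (x + fst z *\<^sub>R d) (snd z) < fst z * (\<theta> - \<eta>)"]
    by blast
  define t where "t k = fst (Z k)" for k
  define s where "s k = snd (Z k)" for k
  have t: "\<And>k. 0 < t k" "\<And>k. t k < inverse (real (Suc k))" and sS: "\<And>k. s k \<in> S"
    and ds: "\<And>k. dist (x + t k *\<^sub>R d) (s k) < t k * (\<theta> - \<eta>)"
    using Z by (auto simp: t_def s_def)
  define e where "e k = inverse (t k) *\<^sub>R (s k - x)" for k
  have de: "norm (d - e k) < \<theta> - \<eta>" for k
  proof -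
    have tk: "t k > 0" using t(1) by auto
    have "d - e k = inverse (t k) *\<^sub>R ((x + t k *\<^sub>R d) - s k)"
      using tk by (simp add: e_def scaleR_diff_right algebra_simps)
    hence "norm (d - e k) = dist (x + t k *\<^sub>R d) (s k) / t k" using tk by (simp add: dist_norm divide_inverse mult.commute)
    also have "\<dots> < \<theta> - \<eta>" using ds[of k] tk by (simp add: divide_less_eq mult.commute)
    finally show ?thesis .
  qed
  have "bounded (range e)"
  proof -
    have "norm (e k) \<le> norm d + \<theta>" for k
    proof -
      have "norm (e k) \<le> norm d + norm (d - e k)" using norm_triangle_sub[of "e k" d] by (simp add: norm_minus_commute)
      thus ?thesis using de[of k] \<eta> by linarith
    qed
    thus ?thesis by (auto simp: bounded_iff)
  qed
  then obtain l R where R: "strict_mono R" "(e \<circ> R) \<longlonglongrightarrow> l"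
    using bounded_imp_convergent_subsequence by blast
  have t0: "t \<longlonglongrightarrow> 0"
    by (rule Lim_null_comparison[OF _ LIMSEQ_inverse_real_of_nat])
       (use t in \<open>auto intro!: always_eventually less_imp_le simp: abs_of_pos\<close>)
  have lT: "l \<in> tangent_cone S x" unfolding tangent_cone_def
  proof (intro CollectI exI[of _ "t \<circ> R"] exI[of _ "e \<circ> R"] conjI allI)
    fix k
    show "0 < (t \<circ> R) k" using t(1) by simp
    have "t (R k) \<noteq> 0" using t(1)[of "R k"] by simp
    thus "x + (t \<circ> R) k *\<^sub>R (e \<circ> R) k \<in> S" using sS[of "R k"] by (simp add: e_def)
  next
    show "(t \<circ> R) \<longlonglongrightarrow> 0" by (rule LIMSEQ_subseq_LIMSEQ[OF t0 R(1)])
    show "(e \<circ> R) \<longlonglongrightarrow> l" by (rule R(2))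
  qed
  have "norm (d - l) \<le> \<theta> - \<eta>"
  proof (rule tendsto_le[OF _ tendsto_const])
    show "(\<lambda>k. norm (d - (e \<circ> R) k)) \<longlonglongrightarrow> norm (d - l)" by (intro tendsto_intros R(2))
    show "eventually (\<lambda>k. norm (d - (e \<circ> R) k) \<le> \<theta> - \<eta>) sequentially"
      using de by (auto intro!: always_eventually less_imp_le)
  qed simp
  moreover have "\<theta> \<le> dist d l" unfolding \<theta>_def by (rule infdist_le[OF lT])
  ultimately show False using \<eta> by (simp add: dist_norm)
qed

theorem corollary3p10:
  fixes f :: "'a::euclidean_space \<Rightarrow> real" and g :: "'a \<Rightarrow> 'b::euclidean_space"
    and K :: "'b set"
    and Df :: "'a \<Rightarrow> ('a \<Rightarrow>\<^sub>L real)" and D2f :: "'a \<Rightarrow> ('a \<Rightarrow>\<^sub>L ('a \<Rightarrow>\<^sub>L real))"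
    and Dg :: "'a \<Rightarrow> ('a \<Rightarrow>\<^sub>L 'b)" and D2g :: "'a \<Rightarrow> ('a \<Rightarrow>\<^sub>L ('a \<Rightarrow>\<^sub>L 'b))"
    and xbar :: 'a and \<kappa> \<delta> :: real
  assumes f_deriv: "\<And>x. (f has_derivative blinfun_apply (Df x)) (at x)"
    and f_deriv2: "\<And>x. (Df has_derivative blinfun_apply (D2f x)) (at x)"
    and f_cont2: "continuous_on UNIV D2f"
    and g_deriv: "\<And>x. (g has_derivative blinfun_apply (Dg x)) (at x)"
    and g_deriv2: "\<And>x. (Dg has_derivative blinfun_apply (D2g x)) (at x)"
    and g_cont2: "continuous_on UNIV D2g"
    and K_closed: "closed K"
    and S_nonempty: "optimal_set f g K \<noteq> {}"
    and sharp: "weak_sharp_min2 f g K xbar \<kappa> \<delta>"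
    and rcq: "\<forall>x \<in> feasible_set g K \<inter> ball xbar \<delta>. \<forall>d \<in> critical_cone Df Dg g K x.
                DirRCQ Dg g K x d"
  shows
   "(\<forall>\<epsilon> \<in> {0..<1/2}. \<forall>x \<in> optimal_set f g K \<inter> ball xbar \<delta>.
      \<forall>d \<in> critical_cone Df Dg g K x \<inter> eps_prox_normal_cone (optimal_set f g K) x \<epsilon>.
        (\<forall>Kd. Kd \<noteq> {} \<and> convex Kd \<and>
              Kd \<subseteq> asymptotic_second_tangent_cone K (g x) (blinfun_apply (Dg x) d) \<longrightarrow>
           (\<exists>lam \<in> multipliers_c Df Dg g K x d. support_fun Kd lam \<le> 0)) \<and>
        (second_tangent_set K (g x) (blinfun_apply (Dg x) d) \<noteq> {} \<longrightarrow>
          (\<forall>Kd. Kd \<noteq> {} \<and> convex Kd \<and>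
                Kd \<subseteq> second_tangent_set K (g x) (blinfun_apply (Dg x) d) \<longrightarrow>
             (\<exists>lam \<in> multipliers_c Df Dg g K x d.
                ereal (hessL D2f D2g x lam d) - support_fun Kd lam
                  \<ge> ereal (2 * \<kappa> * (1 - 2 * \<epsilon>)\<^sup>2 * (norm d)\<^sup>2))))) \<and>
    (\<forall>x \<in> optimal_set f g K \<inter> ball xbar \<delta>. \<forall>d \<in> critical_cone Df Dg g K x.
        (\<forall>Kd. Kd \<noteq> {} \<and> convex Kd \<and>
              Kd \<subseteq> asymptotic_second_tangent_cone K (g x) (blinfun_apply (Dg x) d) \<longrightarrow>
           (\<exists>lam \<in> multipliers_c Df Dg g K x d. support_fun Kd lam \<le> 0)) \<and>
        (second_tangent_set K (g x) (blinfun_apply (Dg x) d) \<noteq> {} \<longrightarrow>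
          (\<forall>Kd. Kd \<noteq> {} \<and> convex Kd \<and>
                Kd \<subseteq> second_tangent_set K (g x) (blinfun_apply (Dg x) d) \<longrightarrow>
             (\<exists>lam \<in> multipliers_c Df Dg g K x d.
                ereal (hessL D2f D2g x lam d) - support_fun Kd lam
                  \<ge> ereal (2 * \<kappa> * (infdist d (tangent_cone (optimal_set f g K) x))\<^sup>2)))))"
proof -
  define \<Phi> where "\<Phi> = feasible_set g K"
  define S where "S = optimal_set f g K"
  have \<kappa>: "\<kappa> > 0" using sharp unfolding weak_sharp_min2_def by auto
  have SP: "S \<subseteq> \<Phi>" unfolding S_def \<Phi>_def optimal_set_def by auto
  have core: "(\<forall>Kd. Kd \<noteq> {} \<and> convex Kd \<and>
              Kd \<subseteq> asymptotic_second_tangent_cone K (g x) (blinfun_apply (Dg x) d) \<longrightarrow>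
           (\<exists>lam \<in> multipliers_c Df Dg g K x d. support_fun Kd lam \<le> 0)) \<and>
        (second_tangent_set K (g x) (blinfun_apply (Dg x) d) \<noteq> {} \<longrightarrow>
          (\<forall>Kd. Kd \<noteq> {} \<and> convex Kd \<and>
                Kd \<subseteq> second_tangent_set K (g x) (blinfun_apply (Dg x) d) \<longrightarrow>
             (\<exists>lam \<in> multipliers_c Df Dg g K x d.
                ereal (hessL D2f D2g x lam d) - support_fun Kd lam
                  \<ge> ereal (2 * \<kappa> * \<theta>^2))))"
    if xS: "x \<in> S \<inter> ball xbar \<delta>" and dC: "d \<in> critical_cone Df Dg g K x" and \<theta>: "\<theta> \<ge> 0"
      and growth: "\<And>\<eta>. \<eta> > 0 \<Longrightarrow> \<exists>\<tau>>0. \<forall>t. 0 < t \<and> t < \<tau> \<longrightarrow> infdist (x + t *\<^sub>R d) S \<ge> t * (\<theta> - \<eta>)"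
    for x d \<theta>
  proof -
    have xP: "x \<in> \<Phi>" using xS SP by auto
    hence xK: "g x \<in> K" by (simp add: \<Phi>_def feasible_set_def)
    have rc: "DirRCQ Dg g K x d" using rcq xP xS dC unfolding \<Phi>_def by blast
    obtain \<rho>0 where \<rho>0: "\<rho>0 > 0" and ls: "\<And>y. y \<in> feasible_set g K \<Longrightarrow> norm (y - x) < \<rho>0 \<Longrightarrow>
           f y \<ge> f x + \<kappa> * (infdist y S)^2"
      using local_sharp[OF sharp, of x] xS unfolding S_def by blast
    have lm: "f y \<ge> f x" if "y \<in> feasible_set g K" "norm (y - x) < \<rho>0" for y
    proof -
      have "\<kappa> * (infdist y S)^2 \<ge> 0" using \<kappa> by simp
      thus ?thesis using ls[OF that] by linarith
    qed
    show ?thesis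
    proof (intro conjI allI impI)
      fix Kd assume Kd: "Kd \<noteq> {} \<and> convex Kd \<and> Kd \<subseteq> asymptotic_second_tangent_cone K (g x) (blinfun_apply (Dg x) d)"
      show "\<exists>lam \<in> multipliers_c Df Dg g K x d. support_fun Kd lam \<le> 0"
        using Kd by (intro mainTpp[OF f_deriv f_deriv2 g_deriv g_deriv2 K_closed xK \<rho>0 lm rc dC]) auto
    next
      fix Kd assume Kd: "Kd \<noteq> {} \<and> convex Kd \<and> Kd \<subseteq> second_tangent_set K (g x) (blinfun_apply (Dg x) d)"
      show "\<exists>lam \<in> multipliers_c Df Dg g K x d. ereal (hessL D2f D2g x lam d) - support_fun Kd lam \<ge> ereal (2 * \<kappa> * \<theta>^2)"
        using Kd \<kappa> by (intro mainT2[OF f_deriv f_deriv2 g_deriv g_deriv2 K_closed xK \<rho>0 ls _ rc dC \<theta> growth]) auto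
    qed
  qed
  show ?thesis
  proof (rule conjI; intro ballI)
    fix \<epsilon> x d assume e: "\<epsilon> \<in> {0..<1/2}" and xS: "x \<in> optimal_set f g K \<inter> ball xbar \<delta>"
      and dd: "d \<in> critical_cone Df Dg g K x \<inter> eps_prox_normal_cone (optimal_set f g K) x \<epsilon>"
    have th: "(1 - 2 * \<epsilon>) * norm d \<ge> 0" using e by simp
    have gr: "\<exists>\<tau>>0. \<forall>t. 0 < t \<and> t < \<tau> \<longrightarrow> infdist (x + t *\<^sub>R d) S \<ge> t * ((1 - 2 * \<epsilon>) * norm d - \<eta>)"
      if "\<eta> > 0" for \<eta>
      using growth_eps[of x S d \<epsilon> \<eta>] xS dd that unfolding S_def by blast
    have eq: "2 * \<kappa> * ((1 - 2 * \<epsilon>) * norm d)^2 = 2 * \<kappa> * (1 - 2 * \<epsilon>)\<^sup>2 * (norm d)\<^sup>2"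
      by (simp add: power_mult_distrib)
    show "(\<forall>Kd. Kd \<noteq> {} \<and> convex Kd \<and>
              Kd \<subseteq> asymptotic_second_tangent_cone K (g x) (blinfun_apply (Dg x) d) \<longrightarrow>
           (\<exists>lam \<in> multipliers_c Df Dg g K x d. support_fun Kd lam \<le> 0)) \<and>
        (second_tangent_set K (g x) (blinfun_apply (Dg x) d) \<noteq> {} \<longrightarrow>
          (\<forall>Kd. Kd \<noteq> {} \<and> convex Kd \<and>
                Kd \<subseteq> second_tangent_set K (g x) (blinfun_apply (Dg x) d) \<longrightarrow>
             (\<exists>lam \<in> multipliers_c Df Dg g K x d.
                ereal (hessL D2f D2g x lam d) - support_fun Kd lam
                  \<ge> ereal (2 * \<kappa> * (1 - 2 * \<epsilon>)\<^sup>2 * (norm d)\<^sup>2))))"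
      using core[of x d "(1 - 2 * \<epsilon>) * norm d", OF _ _ th gr] xS dd unfolding S_def eq by blast
  next
    fix x d assume xS: "x \<in> optimal_set f g K \<inter> ball xbar \<delta>" and dC: "d \<in> critical_cone Df Dg g K x"
    have th: "infdist d (tangent_cone (optimal_set f g K) x) \<ge> 0" by (rule infdist_nonneg)
    have gr: "\<exists>\<tau>>0. \<forall>t. 0 < t \<and> t < \<tau> \<longrightarrow> infdist (x + t *\<^sub>R d) S \<ge> t * (infdist d (tangent_cone (optimal_set f g K) x) - \<eta>)"
      if "\<eta> > 0" for \<eta>
      using growth_tan[of x S \<eta> d] xS that unfolding S_def by blast
    show "(\<forall>Kd. Kd \<noteq> {} \<and> convex Kd \<and>
              Kd \<subseteq> asymptotic_second_tangent_cone K (g x) (blinfun_apply (Dg x) d) \<longrightarrow>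
           (\<exists>lam \<in> multipliers_c Df Dg g K x d. support_fun Kd lam \<le> 0)) \<and>
        (second_tangent_set K (g x) (blinfun_apply (Dg x) d) \<noteq> {} \<longrightarrow>
          (\<forall>Kd. Kd \<noteq> {} \<and> convex Kd \<and>
                Kd \<subseteq> second_tangent_set K (g x) (blinfun_apply (Dg x) d) \<longrightarrow>
             (\<exists>lam \<in> multipliers_c Df Dg g K x d.
                ereal (hessL D2f D2g x lam d) - support_fun Kd lam
                  \<ge> ereal (2 * \<kappa> * (infdist d (tangent_cone (optimal_set f g K) x))\<^sup>2))))"
      using core[of x d "infdist d (tangent_cone (optimal_set f g K) x)", OF _ dC th gr] xS unfolding S_def by blast
  qed
qed

end
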